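(* Let $X$ be a real linear Polish space and let $\Omega\subset X$ be a nonempty convex open set. If $f:\Omega\to\mathbb{R}$ is Jensen convex and $f$ is bounded above on some set $T\subset\Omega$ which is $D$-measurable and not Haar meager, then $f$ is continuous on $\Omega$.
   Context: A real linear Polish space is a real topological vector space whose topology is Polish. A set $A\subset X$ is Haar meager if there exist a Borel set $B\subset X$ with $A\subset B$, a compact metric space $K$ and a continuous function $g:K\to X$ such that $g^{-1}(B+x)$ is meager in $K$ for all $x\in X$. A set $A\subset X$ is $D$-measurable if $A=B\cup M$ for some Borel set $B\subset X$ and some Haar meager set $M\subset X$. A function $f:\Omega\to\mathbb{R}$ is Jensen convex if $f\left(\frac{x+y}{2}\right)\le\frac{f(x)+f(y)}{2}$ for all $x,y\in\Omega$. *)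

theory Defs
  imports "HOL-Analysis.Analysis"
begin

definition nowhere_dense_in :: "'a topology \<Rightarrow> 'a set \<Rightarrow> bool" where
  "nowhere_dense_in T N \<longleftrightarrow> N \<subseteq> topspace T \<and> T interior_of (T closure_of N) = {}"

definition meager_in :: "'a topology \<Rightarrow> 'a set \<Rightarrow> bool" where
  "meager_in T S \<longleftrightarrow> (\<exists>F. countable F \<and> (\<forall>N\<in>F. nowhere_dense_in T N) \<and> S \<subseteq> \<Union>F)"

text \<open>The compact metric space K is represented (up to homeomorphism)
  as a nonempty compact subset of the Hilbert-cube-containing Polish space nat => real
  with the product topology; every compact metric space embeds there.\<close>
definition haar_meager :: "'a::{real_vector,topological_space} set \<Rightarrow> bool" where
  "haar_meager A \<longleftrightarrow>
     (\<exists>B (K :: (nat \<Rightarrow> real) set) (g :: (nat \<Rightarrow> real) \<Rightarrow> 'a).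
        B \<in> sets borel \<and> A \<subseteq> B \<and> K \<noteq> {} \<and> compact K \<and> continuous_on K g \<and>
        (\<forall>x. meager_in (top_of_set K) {k \<in> K. g k \<in> (\<lambda>b. b + x) ` B}))"

definition D_measurable :: "'a::{real_vector,topological_space} set \<Rightarrow> bool" where
  "D_measurable A \<longleftrightarrow> (\<exists>B M. B \<in> sets borel \<and> haar_meager M \<and> A = B \<union> M)"

definition jensen_convex_on :: "'a::real_vector set \<Rightarrow> ('a \<Rightarrow> real) \<Rightarrow> bool" where
  "jensen_convex_on \<Omega> f \<longleftrightarrow>
     (\<forall>x\<in>\<Omega>. \<forall>y\<in>\<Omega>. f ((1/2) *\<^sub>R (x + y)) \<le> (f x + f y) / 2)"

end

theory Submission
  imports Defs
begin

lemma tvs_add: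
  fixes \<phi> \<psi> :: "'b::topological_space \<Rightarrow> 'a::{real_vector,topological_space}"
  assumes AC: "continuous_on UNIV (\<lambda>p::'a::{real_vector,topological_space} \<times> 'a. fst p + snd p)"
    and "continuous_on S \<phi>" "continuous_on S \<psi>"
  shows "continuous_on S (\<lambda>z. \<phi> z + \<psi> z)"
proof -
  have "continuous_on S (\<lambda>z. (\<phi> z, \<psi> z))" by (intro continuous_on_Pair assms)
  moreover have "continuous_on ((\<lambda>z. (\<phi> z, \<psi> z)) ` S) (\<lambda>p. fst p + snd p)"
    by (rule continuous_on_subset[OF AC]) simp
  ultimately have "continuous_on S ((\<lambda>p. fst p + snd p) \<circ> (\<lambda>z. (\<phi> z, \<psi> z)))"
    by (rule continuous_on_compose)
  then show ?thesis by (simp add: o_def)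
qed

lemma tvs_scale:
  fixes \<phi> :: "'b::topological_space \<Rightarrow> 'a::{real_vector,topological_space}" and a :: "'b \<Rightarrow> real"
  assumes SC: "continuous_on UNIV (\<lambda>p::real \<times> 'a::{real_vector,topological_space}. fst p *\<^sub>R snd p)"
    and "continuous_on S a" "continuous_on S \<phi>"
  shows "continuous_on S (\<lambda>z. a z *\<^sub>R \<phi> z)"
proof -
  have "continuous_on S (\<lambda>z. (a z, \<phi> z))" by (intro continuous_on_Pair assms)
  moreover have "continuous_on ((\<lambda>z. (a z, \<phi> z)) ` S) (\<lambda>p. fst p *\<^sub>R snd p)"
    by (rule continuous_on_subset[OF SC]) simp
  ultimately have "continuous_on S ((\<lambda>p. fst p *\<^sub>R snd p) \<circ> (\<lambda>z. (a z, \<phi> z)))"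
    by (rule continuous_on_compose)
  then show ?thesis by (simp add: o_def)
qed

lemma tvs_affine:
  assumes AC: "continuous_on UNIV (\<lambda>p::'a::{real_vector,topological_space} \<times> 'a. fst p + snd p)"
    and SC: "continuous_on UNIV (\<lambda>p::real \<times> 'a. fst p *\<^sub>R snd p)"
  shows "continuous_on UNIV (\<lambda>y::'a. c *\<^sub>R y + d)"
  by (intro tvs_add[OF AC] tvs_scale[OF SC] continuous_on_const continuous_on_id)

lemma tvs_open_affine_vimage:
  assumes AC: "continuous_on UNIV (\<lambda>p::'a::{real_vector,topological_space} \<times> 'a. fst p + snd p)"
    and SC: "continuous_on UNIV (\<lambda>p::real \<times> 'a. fst p *\<^sub>R snd p)"
    and "open U"
  shows "open ((\<lambda>y::'a. c *\<^sub>R y + d) -` U)"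
  using tvs_affine[OF AC SC, of c d] assms(3) open_vimage by blast

lemma jensen_halving:
  fixes f :: "'a::real_vector \<Rightarrow> real"
  assumes J: "jensen_convex_on \<Omega> f" and C: "convex \<Omega>" and q: "q \<in> \<Omega>" and qv: "q + v \<in> \<Omega>"
  shows "q + (1/2)^n *\<^sub>R v \<in> \<Omega> \<and> f (q + (1/2)^n *\<^sub>R v) \<le> (1 - (1/2)^n) * f q + (1/2)^n * f (q + v)"
proof (induction n)
  case 0
  then show ?case using qv by simp
next
  case (Suc n)
  define h :: real where "h = (1/2)^n"
  have mem: "q + (1/2)^(Suc n) *\<^sub>R v \<in> \<Omega>"
  proof -
    have h0: "0 \<le> h" "h \<le> 1" unfolding h_def by (auto simp: power_le_one)
    have "(1 - h/2) *\<^sub>R q + (h/2) *\<^sub>R (q + v) \<in> \<Omega>"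
      using C q qv h0 unfolding convex_def by auto
    moreover have "(1 - h/2) *\<^sub>R q + (h/2) *\<^sub>R (q + v) = q + (1/2)^(Suc n) *\<^sub>R v"
      by (simp add: h_def algebra_simps)
    ultimately show ?thesis by simp
  qed
  have eq: "q + (1/2)^(Suc n) *\<^sub>R v = (1/2) *\<^sub>R (q + (q + h *\<^sub>R v))"
  proof -
    have "(1/2) *\<^sub>R (q + (q + h *\<^sub>R v)) = ((1/2) *\<^sub>R q + (1/2) *\<^sub>R q) + ((1/2)*h) *\<^sub>R v"
      by (simp add: algebra_simps)
    also have "(1/2) *\<^sub>R q + (1/2) *\<^sub>R q = q" by (simp flip: scaleR_add_left)
    finally show ?thesis by (simp add: h_def)
  qed
  have "f ((1/2) *\<^sub>R (q + (q + h *\<^sub>R v))) \<le> (f q + f (q + h *\<^sub>R v)) / 2"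
    using J q Suc.IH unfolding jensen_convex_on_def h_def by blast
  then have "f (q + (1/2)^(Suc n) *\<^sub>R v) \<le> (f q + f (q + h *\<^sub>R v)) / 2"
    by (simp only: eq)
  also have "\<dots> \<le> (f q + ((1 - h) * f q + h * f (q + v))) / 2"
    using Suc.IH unfolding h_def by auto
  also have "\<dots> = (1 - (1/2)^(Suc n)) * f q + (1/2)^(Suc n) * f (q + v)"
    unfolding h_def by (simp add: field_simps)
  finally have "f (q + (1/2)^(Suc n) *\<^sub>R v) \<le> (1 - (1/2)^(Suc n)) * f q + (1/2)^(Suc n) * f (q + v)" .
  with mem show ?case by blast
qed

lemma BD_local_cont:
  fixes f :: "'a::{real_vector,metric_space} \<Rightarrow> real"
  assumes AC: "continuous_on UNIV (\<lambda>p::'a \<times> 'a. fst p + snd p)"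
    and SC: "continuous_on UNIV (\<lambda>p::real \<times> 'a. fst p *\<^sub>R snd p)"
    and J: "jensen_convex_on \<Omega> f" and C: "convex \<Omega>"
    and V: "open V" "q \<in> V" "V \<subseteq> \<Omega>" and bd: "\<forall>y\<in>V. f y \<le> c"
  shows "continuous (at q within \<Omega>) f"
proof -
  define V0 where "V0 = {v. q + v \<in> V \<and> q - v \<in> V}"
  have "V0 = (\<lambda>v. 1 *\<^sub>R v + q) -` V \<inter> (\<lambda>v. (-1) *\<^sub>R v + q) -` V"
    unfolding V0_def by (auto simp: algebra_simps)
  then have oV0: "open V0"
    using tvs_open_affine_vimage[OF AC SC V(1)] by (metis open_Int)
  have key: "\<bar>f (q + (1/2)^n *\<^sub>R v) - f q\<bar> \<le> (1/2)^n * (c - f q)" if v: "v \<in> V0" for v n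
  proof -
    define h :: real where "h = (1/2)^n"
    have qO: "q \<in> \<Omega>" using V by auto
    have p1: "q + v \<in> \<Omega>" "q + (-v) \<in> \<Omega>" using v V unfolding V0_def by auto
    have b1: "f (q + v) \<le> c" "f (q + (-v)) \<le> c" using v bd unfolding V0_def by auto
    have h01: "0 \<le> h" "h \<le> 1" unfolding h_def by (auto simp: power_le_one)
    from jensen_halving[OF J C qO p1(1), of n] have A: "q + h *\<^sub>R v \<in> \<Omega>"
        "f (q + h *\<^sub>R v) \<le> (1 - h) * f q + h * f (q + v)" unfolding h_def by auto
    from jensen_halving[OF J C qO p1(2), of n] have B: "q + h *\<^sub>R (-v) \<in> \<Omega>"
        "f (q + h *\<^sub>R (-v)) \<le> (1 - h) * f q + h * f (q + (-v))" unfolding h_def by auto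
    have "f ((1/2) *\<^sub>R ((q + h *\<^sub>R v) + (q + h *\<^sub>R (-v)))) \<le> (f (q + h *\<^sub>R v) + f (q + h *\<^sub>R (-v))) / 2"
      using J A(1) B(1) unfolding jensen_convex_on_def by blast
    moreover have "(1/2) *\<^sub>R ((q + h *\<^sub>R v) + (q + h *\<^sub>R (-v))) = q"
    proof -
      have "(q + h *\<^sub>R v) + (q + h *\<^sub>R (-v)) = q + q" by (simp add: algebra_simps)
      also have "(1/2) *\<^sub>R (q + q) = q" by (simp flip: scaleR_add_left add: scaleR_add_right)
      finally show ?thesis by simp
    qed
    ultimately have C1: "f q \<le> (f (q + h *\<^sub>R v) + f (q + h *\<^sub>R (-v))) / 2" by simp
    have "h * f (q + v) \<le> h * c" "h * f (q + (-v)) \<le> h * c"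
      using b1 h01 by (auto intro: mult_left_mono)
    moreover have "(1 - h) * f q = f q - h * f q" "h * (c - f q) = h * c - h * f q"
      by (auto simp: algebra_simps)
    moreover have "f q - f (q + h *\<^sub>R v) \<le> f (q + h *\<^sub>R (-v)) - f q" using C1 by (linarith | argo | smt (verit))
    ultimately show ?thesis using A(2) B(2) unfolding h_def[symmetric] abs_le_iff by (intro conjI) linarith+
  qed
  show ?thesis
    unfolding continuous_within_topological
  proof (intro allI impI)
    fix B :: "real set" assume B: "open B" "f q \<in> B"
    then obtain e where e: "e > 0" "ball (f q) e \<subseteq> B" by (meson openE)
    have cq: "f q \<le> c" using bd V by auto
    obtain n where n: "(1/2::real)^n < e / (c - f q + 1)"
      using real_arch_pow_inv[of "e / (c - f q + 1)" "1/2"] e cq by auto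
    have small: "(1/2::real)^n * (c - f q) < e"
    proof -
      have "(1/2::real)^n * (c - f q) \<le> (1/2)^n * (c - f q + 1)" by simp
      also have "\<dots> < e / (c - f q + 1) * (c - f q + 1)"
        using n cq by (intro mult_strict_right_mono) auto
      also have "\<dots> = e" using cq by simp
      finally show ?thesis .
    qed
    define A where "A = (\<lambda>y. (2^n) *\<^sub>R y + (- (2^n)) *\<^sub>R q) -` V0"
    have oA: "open A" unfolding A_def by (rule tvs_open_affine_vimage[OF AC SC oV0])
    have "0 \<in> V0" using V unfolding V0_def by auto
    then have qA: "q \<in> A" unfolding A_def by simp
    have "f y \<in> B" if y: "y \<in> A" for y
    proof -
      define v where "v = (2^n) *\<^sub>R y + (- (2^n)) *\<^sub>R q"
      have vV: "v \<in> V0" using y unfolding A_def v_def by simp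
      have yeq: "y = q + (1/2)^n *\<^sub>R v"
        unfolding v_def by (simp add: algebra_simps power_one_over)
      have "\<bar>f y - f q\<bar> < e" using key[OF vV, of n] small yeq by simp
      then show ?thesis using e by (auto simp: dist_real_def)
    qed
    then show "\<exists>A. open A \<and> q \<in> A \<and> (\<forall>y\<in>\<Omega>. y \<in> A \<longrightarrow> f y \<in> B)"
      using oA qA by blast
  qed
qed

lemma BD_spread:
  fixes f :: "'a::{real_vector,metric_space} \<Rightarrow> real"
  assumes AC: "continuous_on UNIV (\<lambda>p::'a \<times> 'a. fst p + snd p)"
    and SC: "continuous_on UNIV (\<lambda>p::real \<times> 'a. fst p *\<^sub>R snd p)"
    and J: "jensen_convex_on \<Omega> f" and C: "convex \<Omega>" and O: "open \<Omega>"
    and U: "open U" "p0 \<in> U" "U \<subseteq> \<Omega>" and bd: "\<forall>u\<in>U. f u \<le> c" and q: "q \<in> \<Omega>"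
  shows "\<exists>V c'. open V \<and> q \<in> V \<and> V \<subseteq> \<Omega> \<and> (\<forall>y\<in>V. f y \<le> c')"
proof -
  have cs: "continuous_on UNIV (\<lambda>s::real. s *\<^sub>R (q - p0) + q)"
    by (intro tvs_add[OF AC] tvs_scale[OF SC] continuous_on_const continuous_on_id)
  have "open ((\<lambda>s::real. s *\<^sub>R (q - p0) + q) -` \<Omega>)" using cs O open_vimage by blast
  moreover have "0 \<in> (\<lambda>s::real. s *\<^sub>R (q - p0) + q) -` \<Omega>" using q by simp
  ultimately obtain \<eta> where eta: "\<eta> > 0" "ball 0 \<eta> \<subseteq> (\<lambda>s::real. s *\<^sub>R (q - p0) + q) -` \<Omega>"
    by (meson openE)
  obtain m where m: "(1/2::real)^m < \<eta>" using real_arch_pow_inv[of \<eta> "1/2"] eta by auto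
  define h :: real where "h = (1/2)^(Suc m)"
  have h: "0 < h" "h \<le> 1/2" unfolding h_def by (auto simp: power_le_one)
  define \<epsilon> where "\<epsilon> = h / (1 - h)"
  have "\<epsilon> \<le> 2 * h" unfolding \<epsilon>_def using h by (simp add: field_simps)
  also have "2 * h = (1/2)^m" unfolding h_def by simp
  finally have "\<epsilon> < \<eta>" using m by simp
  moreover have "\<epsilon> \<ge> 0" unfolding \<epsilon>_def using h by simp
  ultimately have "\<epsilon> \<in> ball 0 \<eta>" by (simp add: dist_real_def)
  define r where "r = \<epsilon> *\<^sub>R (q - p0) + q"
  have rO: "r \<in> \<Omega>" using eta \<open>\<epsilon> \<in> ball 0 \<eta>\<close> unfolding r_def by auto
  have r1: "(1 - h) *\<^sub>R r = q - h *\<^sub>R p0"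
  proof -
    have "(1 - h) * \<epsilon> = h" unfolding \<epsilon>_def using h by simp
    then have "(1 - h) *\<^sub>R r = h *\<^sub>R (q - p0) + (1 - h) *\<^sub>R q"
      unfolding r_def by (simp add: scaleR_add_right)
    also have "\<dots> = q - h *\<^sub>R p0" by (simp add: algebra_simps)
    finally show ?thesis .
  qed
  define V where "V = (\<lambda>y. (1/h) *\<^sub>R y + (p0 - (1/h) *\<^sub>R q)) -` U"
  have oV: "open V" unfolding V_def by (rule tvs_open_affine_vimage[OF AC SC U(1)])
  have qV: "q \<in> V" unfolding V_def using U by simp
  have h0: "h \<noteq> 0" using h by simp
  have hz: "\<And>z::'a. h *\<^sub>R ((1/h) *\<^sub>R z) = z" using h0 by (simp add: scaleR_scaleR)
  have main: "y \<in> \<Omega> \<and> f y \<le> (1 - h) * f r + h * c" if y: "y \<in> V" for y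
  proof -
    define u where "u = (1/h) *\<^sub>R (y - q) + p0"
    have uU: "u \<in> U" using y unfolding V_def u_def by (simp add: algebra_simps)
    have hu: "h *\<^sub>R u = (y - q) + h *\<^sub>R p0" unfolding u_def using h0 by (simp add: scaleR_add_right hz)
    have yeq: "y = r + h *\<^sub>R (u - r)"
    proof -
      have "r + h *\<^sub>R (u - r) = (1 - h) *\<^sub>R r + h *\<^sub>R u" by (simp add: algebra_simps)
      also have "\<dots> = y" unfolding r1 hu by simp
      finally show ?thesis by simp
    qed
    have "r + (u - r) \<in> \<Omega>" using uU U by auto
    from jensen_halving[OF J C rO this, of "Suc m"]
    have "y \<in> \<Omega>" "f y \<le> (1 - h) * f r + h * f u"
      using yeq unfolding h_def by auto
    moreover have "h * f u \<le> h * c" using bd uU h by (intro mult_left_mono) auto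
    ultimately show ?thesis by auto
  qed
  show ?thesis
    by (rule exI[of _ V], rule exI[of _ "(1 - h) * f r + h * c"]) (use oV qV main in auto)
qed

lemma BD:
  fixes f :: "'a::{real_vector,metric_space} \<Rightarrow> real"
  assumes AC: "continuous_on UNIV (\<lambda>p::'a \<times> 'a. fst p + snd p)"
    and SC: "continuous_on UNIV (\<lambda>p::real \<times> 'a. fst p *\<^sub>R snd p)"
    and J: "jensen_convex_on \<Omega> f" and C: "convex \<Omega>" and O: "open \<Omega>"
    and U: "open U" "p0 \<in> U" "U \<subseteq> \<Omega>" and bd: "\<forall>u\<in>U. f u \<le> c"
  shows "continuous_on \<Omega> f"
  unfolding continuous_on_eq_continuous_within
proof
  fix q assume q: "q \<in> \<Omega>"
  from BD_spread[OF AC SC J C O U bd q] obtain V c' where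
    "open V" "q \<in> V" "V \<subseteq> \<Omega>" "\<forall>y\<in>V. f y \<le> c'" by blast
  from BD_local_cont[OF AC SC J C this] show "continuous (at q within \<Omega>) f" .
qed

lemma nowhere_dense_subset:
  "nowhere_dense_in X N \<Longrightarrow> M \<subseteq> N \<Longrightarrow> nowhere_dense_in X M"
proof -
  assume a: "nowhere_dense_in X N" "M \<subseteq> N"
  have "X interior_of (X closure_of M) \<subseteq> X interior_of (X closure_of N)"
    using a(2) by (intro interior_of_mono closure_of_mono)
  moreover have "N \<subseteq> topspace X" using a(1) by (simp add: nowhere_dense_in_def)
  then have "M \<subseteq> topspace X" using a(2) by simp
  moreover have "X interior_of (X closure_of N) = {}" using a(1) by (simp add: nowhere_dense_in_def)
  ultimately show ?thesis unfolding nowhere_dense_in_def by simp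
qed

lemma meager_in_subset:
  "meager_in X S \<Longrightarrow> T \<subseteq> S \<Longrightarrow> meager_in X T"
proof -
  assume "meager_in X S" "T \<subseteq> S"
  then obtain F where "countable F" "\<forall>N\<in>F. nowhere_dense_in X N" "S \<subseteq> \<Union>F"
    unfolding meager_in_def by auto
  with \<open>T \<subseteq> S\<close> show ?thesis unfolding meager_in_def by (meson order_trans)
qed

lemma meager_in_topspace: "meager_in X S \<Longrightarrow> S \<subseteq> topspace X"
proof -
  assume "meager_in X S"
  then obtain F where "\<forall>N\<in>F. nowhere_dense_in X N" "S \<subseteq> \<Union>F"
    unfolding meager_in_def by auto
  then have "\<forall>N\<in>F. N \<subseteq> topspace X" unfolding nowhere_dense_in_def by auto
  with \<open>S \<subseteq> \<Union>F\<close> show ?thesis by auto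
qed

lemma meager_in_empty [simp]: "meager_in X {}"
  unfolding meager_in_def by (rule exI[of _ "{}"]) auto

lemma nowhere_dense_meager: "nowhere_dense_in X N \<Longrightarrow> meager_in X N"
  unfolding meager_in_def by (rule exI[of _ "{N}"]) auto

lemma meager_in_UN:
  assumes "countable I" "\<And>i. i \<in> I \<Longrightarrow> meager_in X (A i)"
  shows "meager_in X (\<Union>i\<in>I. A i)"
proof -
  from assms(2) have "\<forall>i\<in>I. \<exists>F. countable F \<and> (\<forall>N\<in>F. nowhere_dense_in X N) \<and> A i \<subseteq> \<Union>F"
    unfolding meager_in_def by simp
  then obtain F where F: "\<And>i. i \<in> I \<Longrightarrow> countable (F i) \<and> (\<forall>N\<in>F i. nowhere_dense_in X N) \<and> A i \<subseteq> \<Union>(F i)"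
    by metis
  have "countable (\<Union>i\<in>I. F i)" using F assms(1) by (intro countable_UN) auto
  moreover have "\<forall>N\<in>(\<Union>i\<in>I. F i). nowhere_dense_in X N" using F by auto
  moreover have "(\<Union>i\<in>I. A i) \<subseteq> \<Union>(\<Union>i\<in>I. F i)"
  proof
    fix x assume "x \<in> (\<Union>i\<in>I. A i)"
    then obtain i where "i \<in> I" "x \<in> A i" by auto
    then have "A i \<subseteq> \<Union>(F i)" using F by simp
    then have "x \<in> \<Union>(F i)" using \<open>x \<in> A i\<close> by (rule subsetD)
    with \<open>i \<in> I\<close> show "x \<in> \<Union>(\<Union>i\<in>I. F i)" by auto
  qed
  ultimately show ?thesis unfolding meager_in_def by (intro exI[of _ "\<Union>i\<in>I. F i"]) simp
qed

lemma meager_in_Un: "meager_in X A \<Longrightarrow> meager_in X B \<Longrightarrow> meager_in X (A \<union> B)"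
proof -
  assume "meager_in X A" "meager_in X B"
  then have "meager_in X (\<Union>b\<in>{True,False}. (if b then A else B))"
    by (intro meager_in_UN) auto
  moreover have "(\<Union>b\<in>{True,False}. (if b then A else B)) = A \<union> B" by auto
  ultimately show ?thesis by simp
qed

lemma Baire_open_not_meager:
  assumes X: "locally_compact_space X \<and> regular_space X"
    and U: "openin X U" "U \<noteq> {}"
  shows "\<not> meager_in X U"
proof
  assume "meager_in X U"
  then obtain F where F: "countable F" "\<forall>N\<in>F. nowhere_dense_in X N" "U \<subseteq> \<Union>F"
    unfolding meager_in_def by blast
  let ?G = "(\<lambda>N. X closure_of N) ` F"
  have "X interior_of \<Union>?G = {}"
  proof (rule Baire_category_alt)
    show "completely_metrizable_space X \<or> locally_compact_space X \<and> regular_space X" using X by simp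
    show "countable ?G" using F by simp
    show "closedin X T \<and> X interior_of T = {}" if "T \<in> ?G" for T
      using that F(2) unfolding nowhere_dense_in_def by auto
  qed
  moreover have "U \<subseteq> \<Union>?G"
  proof
    fix x assume "x \<in> U"
    then obtain N where N: "N \<in> F" "x \<in> N" using F(3) by auto
    then have "N \<subseteq> topspace X" using F(2) unfolding nowhere_dense_in_def by auto
    then have "N \<subseteq> X closure_of N" by (rule closure_of_subset)
    then have "x \<in> X closure_of N" using N(2) by (rule subsetD)
    then show "x \<in> \<Union>?G" using N(1) by auto
  qed
  then have "U \<subseteq> X interior_of \<Union>?G" using U(1) by (simp add: interior_of_maximal)
  ultimately show False using U(2) by blast
qed

lemma boundary_nowhere_dense:
  assumes "openin X U"
  shows "nowhere_dense_in X (X closure_of U - U)"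
proof -
  have cl: "closedin X (X closure_of U - U)" using assms by (simp add: closedin_diff)
  have "X interior_of (X closure_of U - U) = {}"
  proof (rule ccontr)
    assume "X interior_of (X closure_of U - U) \<noteq> {}"
    then obtain z where z: "z \<in> X interior_of (X closure_of U - U)" by blast
    let ?O = "X interior_of (X closure_of U - U)"
    have "openin X ?O" by simp
    moreover have "?O \<subseteq> X closure_of U" "?O \<inter> U = {}"
      using interior_of_subset[of X "X closure_of U - U"] by auto
    ultimately have "?O \<inter> X closure_of U = {}"
      using openin_Int_closure_of_eq_empty[of X ?O U] by simp
    then show False using z \<open>?O \<subseteq> X closure_of U\<close> by blast
  qed
  moreover have "X closure_of (X closure_of U - U) = X closure_of U - U" using cl by (rule closure_of_closedin)
  ultimately show ?thesis unfolding nowhere_dense_in_def using closedin_subset[OF cl] by simp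
qed

definition baire_prop :: "'a topology \<Rightarrow> 'a set \<Rightarrow> bool" where
  "baire_prop X A \<longleftrightarrow> A \<subseteq> topspace X \<and> (\<exists>U. openin X U \<and> meager_in X ((A - U) \<union> (U - A)))"

lemma baire_prop_open: "openin X U \<Longrightarrow> baire_prop X U"
  unfolding baire_prop_def using openin_subset by fastforce

lemma baire_prop_compl:
  assumes "baire_prop X A"
  shows "baire_prop X (topspace X - A)"
proof -
  obtain U where U: "openin X U" "meager_in X ((A - U) \<union> (U - A))" "A \<subseteq> topspace X"
    using assms unfolding baire_prop_def by blast
  define V where "V = topspace X - X closure_of U"
  have oV: "openin X V" unfolding V_def by (intro openin_diff openin_topspace closedin_closure_of)
  have "((topspace X - A) - V) \<union> (V - (topspace X - A)) \<subseteq> ((A - U) \<union> (U - A)) \<union> (X closure_of U - U)"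
    unfolding V_def using closure_of_subset[OF openin_subset[OF U(1)]] by auto
  moreover have "meager_in X (((A - U) \<union> (U - A)) \<union> (X closure_of U - U))"
    by (intro meager_in_Un U(2) nowhere_dense_meager boundary_nowhere_dense U(1))
  ultimately have m: "meager_in X (((topspace X - A) - V) \<union> (V - (topspace X - A)))"
    by (rule meager_in_subset[rotated])
  show ?thesis unfolding baire_prop_def
  proof (intro conjI exI)
    show "topspace X - A \<subseteq> topspace X" by blast
    show "openin X V" by (rule oV)
    show "meager_in X (((topspace X - A) - V) \<union> (V - (topspace X - A)))" by (rule m)
  qed
qed

lemma baire_prop_UN:
  assumes "countable I" "\<And>i. i \<in> I \<Longrightarrow> baire_prop X (A i)"
  shows "baire_prop X (\<Union>i\<in>I. A i)"
proof -
  from assms(2) have "\<forall>i\<in>I. \<exists>U. openin X U \<and> meager_in X ((A i - U) \<union> (U - A i)) \<and> A i \<subseteq> topspace X"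
    unfolding baire_prop_def by blast
  then obtain U where U: "\<And>i. i \<in> I \<Longrightarrow> openin X (U i) \<and> meager_in X ((A i - U i) \<union> (U i - A i)) \<and> A i \<subseteq> topspace X"
    by metis
  have U1: "\<And>i. i \<in> I \<Longrightarrow> openin X (U i)" using U by simp
  have U2: "\<And>i. i \<in> I \<Longrightarrow> meager_in X ((A i - U i) \<union> (U i - A i))" using U by simp
  have U3: "\<And>i. i \<in> I \<Longrightarrow> A i \<subseteq> topspace X" using U by simp
  have S: "((\<Union>i\<in>I. A i) - (\<Union>i\<in>I. U i)) \<union> ((\<Union>i\<in>I. U i) - (\<Union>i\<in>I. A i)) \<subseteq> (\<Union>i\<in>I. (A i - U i) \<union> (U i - A i))"
    by blast
  have M: "meager_in X (\<Union>i\<in>I. (A i - U i) \<union> (U i - A i))"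
    using U2 assms(1) by (rule meager_in_UN[rotated])
  have O: "openin X (\<Union>i\<in>I. U i)" using U1 by (intro openin_Union) auto
  have Asub: "(\<Union>i\<in>I. A i) \<subseteq> topspace X" using U3 by (simp add: UN_least)
  show ?thesis unfolding baire_prop_def
  proof (intro conjI exI)
    show "(\<Union>i\<in>I. A i) \<subseteq> topspace X" by (rule Asub)
    show "openin X (\<Union>i\<in>I. U i)" by (rule O)
    show "meager_in X (((\<Union>i\<in>I. A i) - (\<Union>i\<in>I. U i)) \<union> ((\<Union>i\<in>I. U i) - (\<Union>i\<in>I. A i)))"
      by (rule meager_in_subset[OF M S])
  qed
qed

lemma baire_prop_borel_preimage:
  assumes "continuous_map X euclidean \<phi>" and "E \<in> sets borel"
  shows "baire_prop X {z \<in> topspace X. \<phi> z \<in> E}"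
  using assms(2) unfolding sets_borel
proof (induction rule: sigma_sets.induct)
  case (Basic a)
  then have "openin X {z \<in> topspace X. \<phi> z \<in> a}"
    using assms(1) by (simp add: openin_continuous_map_preimage)
  then show ?case by (rule baire_prop_open)
next
  case Empty
  then show ?case using baire_prop_open[of X "{}"] by simp
next
  case (Compl a)
  have "{z \<in> topspace X. \<phi> z \<in> UNIV - a} = topspace X - {z \<in> topspace X. \<phi> z \<in> a}" by auto
  then show ?case using baire_prop_compl[OF Compl.IH] by simp
next
  case (Union A)
  have "{z \<in> topspace X. \<phi> z \<in> \<Union>(range A)} = (\<Union>i\<in>UNIV. {z \<in> topspace X. \<phi> z \<in> A i})" by auto
  then show ?case using baire_prop_UN[of UNIV X "\<lambda>i. {z \<in> topspace X. \<phi> z \<in> A i}"] Union.IH by simp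
qed

lemma baire_prop_nonmeager:
  assumes "baire_prop X A" "\<not> meager_in X A"
  shows "\<exists>U. openin X U \<and> U \<noteq> {} \<and> meager_in X (U - A)"
proof -
  obtain U where U: "openin X U" "meager_in X ((A - U) \<union> (U - A))"
    using assms(1) unfolding baire_prop_def by blast
  have "U \<noteq> {}"
  proof
    assume "U = {}"
    then show False using U(2) assms(2) by simp
  qed
  moreover have "meager_in X (U - A)" using U(2) meager_in_subset by blast
  ultimately show ?thesis using U(1) by blast
qed

lemma homeo_nowhere_dense:
  assumes h: "homeomorphic_map X Y h" and N: "N \<subseteq> topspace X"
  shows "nowhere_dense_in Y (h ` N) \<longleftrightarrow> nowhere_dense_in X N"
proof -
  have cl: "Y closure_of (h ` N) = h ` (X closure_of N)"
    using homeomorphic_map_closure_of[OF h N] by simp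
  have int: "Y interior_of (h ` (X closure_of N)) = h ` (X interior_of (X closure_of N))"
    using homeomorphic_map_interior_of[OF h closure_of_subset_topspace] by simp
  have "h ` N \<subseteq> topspace Y" using h N homeomorphic_imp_surjective_map by blast
  then show ?thesis unfolding nowhere_dense_in_def cl int using N by auto
qed

lemma homeo_meager:
  assumes h: "homeomorphic_map X Y h" and S: "meager_in X S"
  shows "meager_in Y (h ` S)"
proof -
  obtain F where F: "countable F" "\<forall>N\<in>F. nowhere_dense_in X N" "S \<subseteq> \<Union>F"
    using S unfolding meager_in_def by blast
  show ?thesis unfolding meager_in_def
  proof (intro exI[of _ "(\<lambda>N. h ` N) ` F"] conjI)
    show "countable ((`) h ` F)" using F by simp
    show "\<forall>N\<in>(`) h ` F. nowhere_dense_in Y N"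
      using F(2) homeo_nowhere_dense[OF h] unfolding nowhere_dense_in_def by auto
    show "h ` S \<subseteq> \<Union> ((`) h ` F)" using F(3) by blast
  qed
qed

lemma pair_const_cont_left:
  assumes "y \<in> topspace Y"
  shows "continuous_map X (prod_topology X Y) (\<lambda>x. (x, y))"
  using continuous_map_const[of X Y y] assms continuous_map_id[unfolded id_def]
  by (intro continuous_map_pairedI) auto

lemma pair_const_cont_right:
  assumes "x \<in> topspace X"
  shows "continuous_map Y (prod_topology X Y) (\<lambda>y. (x, y))"
  using continuous_map_const[of Y X x] assms continuous_map_id[unfolded id_def]
  by (intro continuous_map_pairedI) auto

lemma KU_easy:
  assumes Y2: "second_countable Y" and M: "meager_in (prod_topology X Y) M"
  shows "meager_in X {x \<in> topspace X. \<not> meager_in Y {y. (x,y) \<in> M}}"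
proof -
  let ?P = "prod_topology X Y"
  obtain \<B> where B: "countable \<B>" "\<And>V. V \<in> \<B> \<Longrightarrow> openin Y V"
    "\<And>U y. openin Y U \<Longrightarrow> y \<in> U \<Longrightarrow> \<exists>V \<in> \<B>. y \<in> V \<and> V \<subseteq> U"
    using Y2 unfolding second_countable_def by metis
  obtain F where F: "countable F" "\<And>N. N \<in> F \<Longrightarrow> nowhere_dense_in ?P N" "M \<subseteq> \<Union>F"
    using M unfolding meager_in_def by auto
  define D where "D N V = {x \<in> topspace X. \<forall>y\<in>V. (x,y) \<in> ?P closure_of N}" for N V
  have nwdD: "nowhere_dense_in X (D N V)" if N: "N \<in> F" and V: "V \<in> \<B>" "V \<noteq> {}" for N V
  proof -
    let ?C = "?P closure_of N"
    have VY: "V \<subseteq> topspace Y" using B(2)[OF V(1)] by (rule openin_subset)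
    let ?K = "(\<lambda>y. {x \<in> topspace X. (x,y) \<in> ?C}) ` V"
    have "closedin X (\<Inter>?K)"
    proof (rule closedin_Inter)
      show "?K \<noteq> {}" using V(2) by simp
      fix S assume "S \<in> ?K"
      then obtain y where y: "y \<in> V" "S = {x \<in> topspace X. (x,y) \<in> ?C}" by auto
      have "continuous_map X ?P (\<lambda>x. (x, y))" using y(1) VY by (intro pair_const_cont_left) auto
      then show "closedin X S" unfolding y(2) by (rule closedin_continuous_map_preimage) simp
    qed
    moreover have eqD: "\<Inter>?K = D N V" unfolding D_def using V(2) by auto
    ultimately have clD: "closedin X (D N V)" by simp
    have intD: "X interior_of (D N V) = {}"
    proof (rule ccontr)
      assume "X interior_of (D N V) \<noteq> {}"
      then obtain z where z: "z \<in> X interior_of (D N V)" by blast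
      obtain w where w: "w \<in> V" using V(2) by blast
      let ?O = "X interior_of (D N V)"
      have oO: "openin X ?O" by simp
      have OD: "?O \<subseteq> D N V" by (rule interior_of_subset)
      have "openin ?P (?O \<times> V)" using oO B(2)[OF V(1)] by (simp add: openin_prod_Times_iff)
      moreover have "?O \<times> V \<subseteq> ?C"
      proof
        fix p assume "p \<in> ?O \<times> V"
        then obtain a b where p: "p = (a,b)" "a \<in> ?O" "b \<in> V" by auto
        then have "a \<in> D N V" using OD by (rule_tac subsetD) auto
        then show "p \<in> ?C" using p unfolding D_def by auto
      qed
      ultimately have "?O \<times> V \<subseteq> ?P interior_of ?C" by (rule interior_of_maximal[rotated])
      moreover have "?P interior_of ?C = {}" using F(2)[OF N] unfolding nowhere_dense_in_def by simp
      ultimately show False using z w by auto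
    qed
    have "X closure_of (D N V) = D N V" using clD by (rule closure_of_closedin)
    then show ?thesis unfolding nowhere_dense_in_def using intD closedin_subset[OF clD] by simp
  qed
  define I where "I = F \<times> {V \<in> \<B>. V \<noteq> {}}"
  have cI: "countable I" unfolding I_def using F(1) B(1) by simp
  have good: "meager_in Y {y. (x,y) \<in> M}"
    if x: "x \<in> topspace X" "x \<notin> (\<Union>i\<in>I. D (fst i) (snd i))" for x
  proof -
    have sec: "nowhere_dense_in Y {y. (x,y) \<in> N}" if N: "N \<in> F" for N
    proof -
      let ?C = "?P closure_of N"
      let ?S = "{y. (x,y) \<in> N}"
      have NP: "N \<subseteq> topspace ?P" using F(2)[OF N] unfolding nowhere_dense_in_def by simp
      have SY: "?S \<subseteq> topspace Y" using NP by auto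
      have cCs: "closedin Y {y \<in> topspace Y. (x,y) \<in> ?C}"
        using pair_const_cont_right[OF x(1)] by (rule closedin_continuous_map_preimage) simp
      have "N \<subseteq> ?C" using NP by (rule closure_of_subset)
      then have "?S \<subseteq> {y \<in> topspace Y. (x,y) \<in> ?C}" using SY by auto
      then have clS: "Y closure_of ?S \<subseteq> {y \<in> topspace Y. (x,y) \<in> ?C}"
        using cCs by (rule closure_of_minimal)
      have "Y interior_of (Y closure_of ?S) = {}"
      proof (rule ccontr)
        assume "Y interior_of (Y closure_of ?S) \<noteq> {}"
        then obtain w where w: "w \<in> Y interior_of (Y closure_of ?S)" by blast
        have "openin Y (Y interior_of (Y closure_of ?S))" by simp
        from B(3)[OF this w] obtain V where V: "V \<in> \<B>" "w \<in> V" "V \<subseteq> Y interior_of (Y closure_of ?S)"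
          by blast
        have "V \<subseteq> Y closure_of ?S" using V(3) interior_of_subset by (rule order_trans)
        then have "V \<subseteq> {y \<in> topspace Y. (x,y) \<in> ?C}" using clS by (rule order_trans)
        then have "x \<in> D N V" unfolding D_def using x(1) by auto
        moreover have "(N, V) \<in> I" unfolding I_def using N V by auto
        ultimately show False using x(2) by force
      qed
      then show ?thesis unfolding nowhere_dense_in_def using SY by simp
    qed
    have "{y. (x,y) \<in> M} \<subseteq> (\<Union>N\<in>F. {y. (x,y) \<in> N})" using F(3) by auto
    moreover have "meager_in Y (\<Union>N\<in>F. {y. (x,y) \<in> N})"
      using F(1) by (rule meager_in_UN) (rule nowhere_dense_meager[OF sec])
    ultimately show ?thesis by (rule meager_in_subset[rotated])
  qed
  have "{x \<in> topspace X. \<not> meager_in Y {y. (x,y) \<in> M}} \<subseteq> (\<Union>i\<in>I. D (fst i) (snd i))"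
    using good by blast
  moreover have "meager_in X (\<Union>i\<in>I. D (fst i) (snd i))"
    using cI
  proof (rule meager_in_UN)
    fix i assume "i \<in> I"
    then show "meager_in X (D (fst i) (snd i))" unfolding I_def
      by (intro nowhere_dense_meager nwdD) auto
  qed
  ultimately show ?thesis by (rule meager_in_subset[rotated])
qed

lemma KU_easy2:
  assumes X2: "second_countable X" and M: "meager_in (prod_topology X Y) M"
  shows "meager_in Y {y \<in> topspace Y. \<not> meager_in X {x. (x,y) \<in> M}}"
proof -
  have sw: "meager_in (prod_topology Y X) ((\<lambda>(x,y). (y,x)) ` M)"
    using homeo_meager[OF homeomorphic_map_swap M] .
  have eq: "\<And>x. {y. (x,y) \<in> (\<lambda>(x,y). (y,x)) ` M} = {y. (y,x) \<in> M}"
    by (auto simp: image_iff) force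
  from KU_easy[OF X2 sw] show ?thesis unfolding eq .
qed

lemma KU_hard:
  assumes X2: "second_countable X"
    and BX: "\<And>U. openin X U \<Longrightarrow> U \<noteq> {} \<Longrightarrow> \<not> meager_in X U"
    and BY: "\<And>V. openin Y V \<Longrightarrow> V \<noteq> {} \<Longrightarrow> \<not> meager_in Y V"
    and H: "baire_prop (prod_topology X Y) H"
    and sec: "\<And>y. y \<in> topspace Y \<Longrightarrow> meager_in X {x. (x,y) \<in> H}"
  shows "meager_in (prod_topology X Y) H"
proof (rule ccontr)
  let ?P = "prod_topology X Y"
  assume "\<not> meager_in ?P H"
  from baire_prop_nonmeager[OF H this] obtain W0 where
    W0: "openin ?P W0" "W0 \<noteq> {}" "meager_in ?P (W0 - H)" by blast
  obtain x0 y0 where "(x0, y0) \<in> W0" using W0(2) by auto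
  then obtain U V where UV: "openin X U" "openin Y V" "x0 \<in> U" "y0 \<in> V" "U \<times> V \<subseteq> W0"
    using W0(1) unfolding openin_prod_topology_alt by meson
  have "U \<times> V - H \<subseteq> W0 - H" using UV(5) by blast
  with W0(3) have m: "meager_in ?P (U \<times> V - H)" by (rule meager_in_subset)
  let ?E = "{y \<in> topspace Y. \<not> meager_in X {x. (x,y) \<in> U \<times> V - H}}"
  have mE: "meager_in Y ?E" by (rule KU_easy2[OF X2 m])
  have "\<not> V \<subseteq> ?E"
  proof
    assume "V \<subseteq> ?E"
    then have "meager_in Y V" using mE by (rule meager_in_subset[rotated])
    then show False using BY[OF UV(2)] UV(4) by auto
  qed
  then obtain y where y: "y \<in> V" "y \<notin> ?E" by blast
  have yY: "y \<in> topspace Y" using openin_subset[OF UV(2)] y(1) by blast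
  then have m1: "meager_in X {x. (x,y) \<in> U \<times> V - H}" using y(2) by simp
  have "U \<subseteq> {x. (x,y) \<in> U \<times> V - H} \<union> {x. (x,y) \<in> H}" using y(1) by auto
  moreover have "meager_in X ({x. (x,y) \<in> U \<times> V - H} \<union> {x. (x,y) \<in> H})"
    by (rule meager_in_Un[OF m1 sec[OF yY]])
  ultimately have "meager_in X U" by (rule meager_in_subset[rotated])
  then show False using BX[OF UV(1)] UV(3) by auto
qed

definition cube :: "(nat \<Rightarrow> real) set" where "cube = {t. \<forall>i. 0 \<le> t i \<and> t i \<le> 1}"

lemma compact_cube: "compact cube"
proof -
  have eq: "cube = PiE UNIV (\<lambda>i. {0..1::real})" unfolding cube_def PiE_def by auto
  have "compactin (product_topology (\<lambda>i. euclidean) UNIV) (PiE UNIV (\<lambda>i. {0..1::real}))"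
    by (subst compactin_PiE) auto
  then show ?thesis unfolding eq euclidean_product_topology by simp
qed

lemma cube_nonempty: "(\<lambda>i. 1/2) \<in> cube" unfolding cube_def by auto

definition psum :: "(nat \<Rightarrow> 'a::real_vector) \<Rightarrow> nat \<Rightarrow> (nat \<Rightarrow> real) \<Rightarrow> 'a" where
  "psum v n t = (\<Sum>i<n. t i *\<^sub>R v i)"

lemma psum_Suc: "psum v (Suc n) t = psum v n t + t n *\<^sub>R v n"
  unfolding psum_def by simp

lemma psum_cont:
  fixes v :: "nat \<Rightarrow> 'a::{real_vector,topological_space}"
  assumes AC: "continuous_on UNIV (\<lambda>p::'a \<times> 'a. fst p + snd p)"
    and SC: "continuous_on UNIV (\<lambda>p::real \<times> 'a. fst p *\<^sub>R snd p)"
  shows "continuous_on S (psum v n)"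
proof (induction n)
  case 0
  then show ?case unfolding psum_def by simp
next
  case (Suc n)
  have "continuous_on S (\<lambda>t. psum v n t + t n *\<^sub>R v n)"
  proof (rule tvs_add[OF AC])
    show "continuous_on S (psum v n)" by (rule Suc.IH)
    show "continuous_on S (\<lambda>t. t n *\<^sub>R v n)"
      by (rule tvs_scale[OF SC]) (auto intro: continuous_on_subset[OF continuous_on_product_coordinates])
  qed
  then show ?case unfolding psum_Suc[abs_def] .
qed

lemma tvs_tendsto_add:
  fixes a b :: "'b \<Rightarrow> 'a::{real_vector,topological_space}"
  assumes AC: "continuous_on UNIV (\<lambda>p::'a \<times> 'a. fst p + snd p)"
    and "(a \<longlongrightarrow> x) F" "(b \<longlongrightarrow> y) F"
  shows "((\<lambda>n. a n + b n) \<longlongrightarrow> x + y) F"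
proof -
  have "((\<lambda>n. (a n, b n)) \<longlongrightarrow> (x, y)) F" using assms by (intro tendsto_Pair)
  from continuous_on_tendsto_compose[OF AC this] show ?thesis by simp
qed

lemma tvs_tendsto_scale:
  fixes a :: "'b \<Rightarrow> 'a::{real_vector,topological_space}"
  assumes SC: "continuous_on UNIV (\<lambda>p::real \<times> 'a. fst p *\<^sub>R snd p)"
    and "(a \<longlongrightarrow> x) F"
  shows "((\<lambda>n. c *\<^sub>R a n) \<longlongrightarrow> c *\<^sub>R x) F"
proof -
  have "((\<lambda>n. (c, a n)) \<longlongrightarrow> (c, x)) F" using assms by (intro tendsto_Pair tendsto_const)
  from continuous_on_tendsto_compose[OF SC this] show ?thesis by simp
qed

lemma psum_dist_bound:
  fixes v :: "nat \<Rightarrow> 'a::{real_vector,metric_space}"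
  assumes small: "\<And>n. dist (psum v (Suc n) t) (psum v n t) < (1/2)^n"
  shows "dist (psum v (n + k) t) (psum v n t) \<le> 2 * (1/2)^n * (1 - (1/2)^k)"
proof (induction k)
  case 0
  then show ?case by simp
next
  case (Suc k)
  have "dist (psum v (n + Suc k) t) (psum v n t) \<le>
        dist (psum v (Suc (n + k)) t) (psum v (n + k) t) + dist (psum v (n + k) t) (psum v n t)"
    by (simp add: dist_triangle)
  also have "\<dots> \<le> (1/2)^(n+k) + 2 * (1/2)^n * (1 - (1/2)^k)"
    using small[of "n+k"] Suc.IH by linarith
  also have "\<dots> = 2 * (1/2)^n * (1 - (1/2)^(Suc k))"
    by (simp add: power_add field_simps)
  finally show ?case .
qed

lemma series_limit:
  fixes v :: "nat \<Rightarrow> 'a::{real_vector,complete_space}"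
  assumes AC: "continuous_on UNIV (\<lambda>p::'a \<times> 'a. fst p + snd p)"
    and SC: "continuous_on UNIV (\<lambda>p::real \<times> 'a. fst p *\<^sub>R snd p)"
    and small: "\<And>n t. t \<in> cube \<Longrightarrow> dist (psum v (Suc n) t) (psum v n t) < (1/2)^n"
  shows "continuous_on cube (\<lambda>t. lim (\<lambda>n. psum v n t))"
    and "\<And>t. t \<in> cube \<Longrightarrow> (\<lambda>n. psum v n t) \<longlonglongrightarrow> lim (\<lambda>n. psum v n t)"
proof -
  have bnd: "dist (psum v m t) (psum v n t) \<le> 2 * (1/2)^n" if "t \<in> cube" "n \<le> m" for t m n
  proof -
    obtain k where m: "m = n + k" using \<open>n \<le> m\<close> le_Suc_ex by blast
    have "dist (psum v m t) (psum v n t) \<le> 2 * (1/2)^n * (1 - (1/2)^k)"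
      unfolding m by (rule psum_dist_bound) (use small that in auto)
    also have "\<dots> \<le> 2 * (1/2)^n" by (simp add: mult_left_le)
    finally show ?thesis .
  qed
  have conv: "(\<lambda>n. psum v n t) \<longlonglongrightarrow> lim (\<lambda>n. psum v n t)" if t: "t \<in> cube" for t
  proof -
    have "Cauchy (\<lambda>n. psum v n t)"
      unfolding Cauchy_altdef2
    proof (intro allI impI)
      fix e :: real assume "e > 0"
      then obtain N where N: "(1/2::real)^N < e/2" using real_arch_pow_inv[of "e/2" "1/2"] by auto
      have "\<forall>n\<ge>N. dist (psum v n t) (psum v N t) < e"
      proof (intro allI impI)
        fix n assume "N \<le> n"
        from bnd[OF t this] N show "dist (psum v n t) (psum v N t) < e" by linarith
      qed
      then show "\<exists>N. \<forall>n\<ge>N. dist (psum v n t) (psum v N t) < e" by blast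
    qed
    then show ?thesis by (simp add: Cauchy_convergent_iff convergent_LIMSEQ_iff)
  qed
  then show "\<And>t. t \<in> cube \<Longrightarrow> (\<lambda>n. psum v n t) \<longlonglongrightarrow> lim (\<lambda>n. psum v n t)" .
  have ubnd: "dist (psum v n t) (lim (\<lambda>n. psum v n t)) \<le> 2 * (1/2)^n" if t: "t \<in> cube" for t n
  proof -
    have "(\<lambda>m. dist (psum v n t) (psum v m t)) \<longlonglongrightarrow> dist (psum v n t) (lim (\<lambda>n. psum v n t))"
      by (intro tendsto_dist tendsto_const conv t)
    moreover have "\<forall>m\<ge>n. dist (psum v n t) (psum v m t) \<le> 2 * (1/2)^n"
    proof (intro allI impI)
      fix m assume "n \<le> m"
      from bnd[OF t this] show "dist (psum v n t) (psum v m t) \<le> 2 * (1/2)^n"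
        by (simp only: dist_commute)
    qed
    ultimately show ?thesis by (intro LIMSEQ_le_const2) auto
  qed
  show "continuous_on cube (\<lambda>t. lim (\<lambda>n. psum v n t))"
  proof (rule uniform_limit_theorem)
    show "\<forall>\<^sub>F n in sequentially. continuous_on cube (psum v n)"
      using psum_cont[OF AC SC] by simp
    show "uniform_limit cube (psum v) (\<lambda>t. lim (\<lambda>n. psum v n t)) sequentially"
    proof (rule uniform_limitI)
      fix e :: real assume "e > 0"
      then obtain N where N: "(1/2::real)^N < e/2" using real_arch_pow_inv[of "e/2" "1/2"] by auto
      have "\<forall>n\<ge>N. \<forall>t\<in>cube. dist (psum v n t) (lim (\<lambda>n. psum v n t)) < e"
      proof (intro allI impI ballI)
        fix n t assume "N \<le> n" "t \<in> cube"
        have "(1/2::real)^n \<le> (1/2)^N" using \<open>N \<le> n\<close> by (simp add: power_decreasing)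
        then show "dist (psum v n t) (lim (\<lambda>n. psum v n t)) < e"
          using ubnd[OF \<open>t \<in> cube\<close>, of n] N by linarith
      qed
      then show "\<forall>\<^sub>F n in sequentially. \<forall>t\<in>cube. dist (psum v n t) (lim (\<lambda>n. psum v n t)) < e"
        unfolding eventually_sequentially by (rule exI[of _ N])
    qed
  qed simp
qed

lemma psum_mid: "psum v n (\<lambda>i. (t i + t' i) / 2) = (1/2) *\<^sub>R (psum v n t + psum v n t')"
proof -
  have "(\<Sum>i<n. ((t i + t' i) / 2) *\<^sub>R v i) = (\<Sum>i<n. (1/2) *\<^sub>R (t i *\<^sub>R v i) + (1/2) *\<^sub>R (t' i *\<^sub>R v i))"
    by (intro sum.cong) (auto simp: scaleR_add_left add_divide_distrib)
  then show ?thesis unfolding psum_def by (simp add: sum.distrib scaleR_sum_right scaleR_add_right)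
qed

lemma psum_shift:
  assumes "j < n"
  shows "psum v n (t(j := t j + s)) = psum v n t + s *\<^sub>R v j"
proof -
  have "psum v n (t(j := t j + s)) = (\<Sum>i<n. t i *\<^sub>R v i + (if i = j then s *\<^sub>R v j else 0))"
    unfolding psum_def by (intro sum.cong) (auto simp: scaleR_add_left)
  also have "\<dots> = psum v n t + s *\<^sub>R v j"
    unfolding psum_def sum.distrib using assms by simp
  finally show ?thesis .
qed

lemma nwd_open_subtop:
  assumes W: "openin X W" and N: "N \<subseteq> W"
  shows "nowhere_dense_in (subtopology X W) N \<longleftrightarrow> nowhere_dense_in X N"
proof -
  have WX: "W \<subseteq> topspace X" using W by (rule openin_subset)
  have cl: "(subtopology X W) closure_of N = W \<inter> X closure_of N"
    using N by (simp add: closure_of_subtopology Int_absorb1)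
  have int: "(subtopology X W) interior_of (W \<inter> X closure_of N) = W \<inter> X interior_of (W \<inter> X closure_of N)"
    using W by (rule interior_of_subtopology_open)
  have "(W \<inter> X interior_of (W \<inter> X closure_of N) = {}) \<longleftrightarrow> (X interior_of (X closure_of N) = {})"
  proof
    assume a: "W \<inter> X interior_of (W \<inter> X closure_of N) = {}"
    show "X interior_of (X closure_of N) = {}"
    proof (rule ccontr)
      assume "X interior_of (X closure_of N) \<noteq> {}"
      then obtain z where z: "z \<in> X interior_of (X closure_of N)" by blast
      let ?O = "X interior_of (X closure_of N)"
      have oO: "openin X ?O" by simp
      have "?O \<subseteq> X closure_of N" by (rule interior_of_subset)
      then have "z \<in> X closure_of N" using z by (rule subsetD)
      then have "\<forall>T. z \<in> T \<and> openin X T \<longrightarrow> (\<exists>y. y \<in> N \<and> y \<in> T)" unfolding in_closure_of by simp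
      then obtain w where w: "w \<in> N" "w \<in> ?O" using z oO by auto
      have "openin X (W \<inter> ?O)" using W oO by (rule openin_Int)
      moreover have "W \<inter> ?O \<subseteq> W \<inter> X closure_of N" using \<open>?O \<subseteq> X closure_of N\<close> by auto
      ultimately have "W \<inter> ?O \<subseteq> X interior_of (W \<inter> X closure_of N)" by (rule interior_of_maximal[rotated])
      moreover have "w \<in> W \<inter> ?O" using w N by auto
      ultimately show False using a by auto
    qed
  next
    assume b: "X interior_of (X closure_of N) = {}"
    have "X interior_of (W \<inter> X closure_of N) \<subseteq> X interior_of (X closure_of N)"
      by (intro interior_of_mono) auto
    then show "W \<inter> X interior_of (W \<inter> X closure_of N) = {}" using b by auto
  qed
  moreover have "N \<subseteq> topspace (subtopology X W) \<longleftrightarrow> N \<subseteq> topspace X" using N WX by auto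
  ultimately show ?thesis unfolding nowhere_dense_in_def cl int by simp
qed

lemma meager_open_subtop:
  assumes W: "openin X W" and Z: "Z \<subseteq> W"
  shows "meager_in (subtopology X W) Z \<longleftrightarrow> meager_in X Z"
proof
  assume "meager_in (subtopology X W) Z"
  then obtain F where F: "countable F" "\<forall>N\<in>F. nowhere_dense_in (subtopology X W) N" "Z \<subseteq> \<Union>F"
    unfolding meager_in_def by auto
  have "\<forall>N\<in>F. nowhere_dense_in X N"
  proof
    fix N assume "N \<in> F"
    then have n: "nowhere_dense_in (subtopology X W) N" using F(2) by simp
    then have "N \<subseteq> W" unfolding nowhere_dense_in_def by auto
    with n show "nowhere_dense_in X N" using nwd_open_subtop[OF W] by simp
  qed
  with F show "meager_in X Z" unfolding meager_in_def by auto
next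
  assume "meager_in X Z"
  then obtain F where F: "countable F" "\<forall>N\<in>F. nowhere_dense_in X N" "Z \<subseteq> \<Union>F"
    unfolding meager_in_def by auto
  let ?F = "(\<lambda>N. N \<inter> W) ` F"
  have "countable ?F" using F(1) by simp
  moreover have "\<forall>N\<in>?F. nowhere_dense_in (subtopology X W) N"
  proof
    fix N' assume "N' \<in> ?F"
    then obtain N where N: "N \<in> F" "N' = N \<inter> W" by auto
    have "nowhere_dense_in X N'" using F(2) N nowhere_dense_subset by blast
    then show "nowhere_dense_in (subtopology X W) N'" using nwd_open_subtop[OF W] N(2) by simp
  qed
  moreover have "Z \<subseteq> \<Union>?F" using F(3) Z by blast
  ultimately show "meager_in (subtopology X W) Z" unfolding meager_in_def by blast
qed

lemma compact_baire:
  fixes S :: "'a::metric_space set"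
  assumes "compact S" "openin (top_of_set S) U" "U \<noteq> {}"
  shows "\<not> meager_in (top_of_set S) U"
proof (rule Baire_open_not_meager[OF _ assms(2,3)])
  have c: "compact_space (top_of_set S)" using assms(1) by (simp add: compact_space_subtopology)
  have h: "Hausdorff_space (top_of_set S)" by (simp add: Hausdorff_space_subtopology)
  show "locally_compact_space (top_of_set S) \<and> regular_space (top_of_set S)"
    using c h by (simp add: compact_imp_locally_compact_space compact_Hausdorff_imp_regular_space)
qed

lemma refl_cont: "continuous_on S (\<lambda>t::nat\<Rightarrow>real. \<lambda>i. 2 * y i - t i)"
  by (intro continuous_on_coordinatewise_then_product continuous_intros
      continuous_on_subset[OF continuous_on_product_coordinates]) auto

lemma refl_pair:
  fixes W G :: "(nat \<Rightarrow> real) set"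
  assumes W: "openin (top_of_set cube) W" "W \<noteq> {}"
    and RW: "\<And>t. t \<in> W \<Longrightarrow> (\<lambda>i. 2 * y i - t i) \<in> W"
    and Z: "meager_in (top_of_set cube) (W - G)"
  shows "\<exists>t\<in>W. t \<in> G \<and> (\<lambda>i. 2 * y i - t i) \<in> G"
proof (rule ccontr)
  assume no: "\<not> ?thesis"
  define R where "R = (\<lambda>t::nat\<Rightarrow>real. \<lambda>i. 2 * y i - t i)"
  have RR: "R (R t) = t" for t unfolding R_def by auto
  have Wc: "W \<subseteq> cube" using openin_subset[OF W(1)] by simp
  have sub: "subtopology (top_of_set cube) W = top_of_set W"
    using Wc by (simp add: subtopology_subtopology Int_absorb1)
  have hm: "homeomorphic_map (top_of_set W) (top_of_set W) R"
    unfolding homeomorphic_map_maps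
  proof (rule exI[of _ R], unfold homeomorphic_maps_def, intro conjI)
    show "continuous_map (top_of_set W) (top_of_set W) R"
      using RW by (simp add: R_def refl_cont Pi_iff)
    then show "continuous_map (top_of_set W) (top_of_set W) R" .
    show "\<forall>x\<in>topspace (top_of_set W). R (R x) = x" using RR by simp
    show "\<forall>x\<in>topspace (top_of_set W). R (R x) = x" using RR by simp
  qed
  have "meager_in (top_of_set W) (W - G)"
    using meager_open_subtop[OF W(1), of "W - G"] Z sub by simp
  then have "meager_in (top_of_set W) (R ` (W - G))" by (rule homeo_meager[OF hm])
  moreover have RWG: "R ` (W - G) \<subseteq> W" using RW unfolding R_def by auto
  ultimately have m2: "meager_in (top_of_set cube) (R ` (W - G))"
    using meager_open_subtop[OF W(1), of "R ` (W - G)"] sub by simp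
  have "W \<subseteq> (W - G) \<union> R ` (W - G)"
  proof
    fix t assume t: "t \<in> W"
    show "t \<in> (W - G) \<union> R ` (W - G)"
    proof (cases "t \<in> G")
      case True
      then have "R t \<notin> G" using no t unfolding R_def by blast
      moreover have "R t \<in> W" using RW t unfolding R_def by simp
      ultimately have "R (R t) \<in> R ` (W - G)" by blast
      then show ?thesis using RR by simp
    next
      case False
      then show ?thesis using t by blast
    qed
  qed
  moreover have "meager_in (top_of_set cube) ((W - G) \<union> R ` (W - G))"
    by (rule meager_in_Un[OF Z m2])
  ultimately have "meager_in (top_of_set cube) W" by (rule meager_in_subset[rotated])
  then show False using compact_baire[OF compact_cube W] by simp
qed

lemma real_interior_point:
  fixes A :: "real set"
  assumes "open A" "a \<in> A" "0 \<le> a" "a \<le> 1"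
  shows "\<exists>y e. 0 < e \<and> e \<le> y \<and> y + e \<le> 1 \<and> (\<forall>s. \<bar>s - y\<bar> < e \<longrightarrow> s \<in> A)"
proof -
  obtain r where r: "r > 0" "ball a r \<subseteq> A" using assms(1,2) by (meson openE)
  define d where "d = min (r/2) (1/4)"
  have d: "0 < d" "d \<le> r/2" "d \<le> 1/4" unfolding d_def using r by auto
  show ?thesis
  proof (cases "a \<le> 1/2")
    case True
    show ?thesis
    proof (intro exI conjI allI impI)
      show "0 < d/2" "d/2 \<le> a + d" "a + d + d/2 \<le> 1" using d True assms by auto
      fix s assume "\<bar>s - (a + d)\<bar> < d/2"
      then have "dist a s < r" unfolding dist_real_def using d r(1) by arith
      then have "s \<in> ball a r" by simp
      then show "s \<in> A" using r by blast
    qed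
  next
    case False
    show ?thesis
    proof (intro exI conjI allI impI)
      show "0 < d/2" "d/2 \<le> a - d" "a - d + d/2 \<le> 1" using d False assms by auto
      fix s assume "\<bar>s - (a - d)\<bar> < d/2"
      then have "dist a s < r" unfolding dist_real_def using d r(1) by arith
      then have "s \<in> ball a r" by simp
      then show "s \<in> A" using r by blast
    qed
  qed
qed

lemma cube_box:
  assumes Q: "openin (top_of_set cube) Q" "Q \<noteq> {}"
  obtains y N \<epsilon> where "\<forall>i\<ge>N. y i = 1/2"
    "\<forall>i<N. 0 < \<epsilon> i \<and> \<epsilon> i \<le> y i \<and> y i + \<epsilon> i \<le> 1"
    "{t \<in> cube. \<forall>i<N. \<bar>t i - y i\<bar> < \<epsilon> i} \<subseteq> Q"
proof -
  obtain Oo where Oo: "open Oo" "Q = cube \<inter> Oo" using Q(1) unfolding openin_open by auto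
  obtain c where c: "c \<in> Q" using Q(2) by auto
  have "openin (product_topology (\<lambda>i. euclidean) UNIV) Oo" "c \<in> Oo"
    using Oo c unfolding open_fun_def by auto
  from product_topology_open_contains_basis[OF this]
  obtain X where X: "c \<in> (\<Pi>\<^sub>E i\<in>UNIV. X i)" "\<And>i. open (X i)" "finite {i. X i \<noteq> UNIV}"
      "(\<Pi>\<^sub>E i\<in>UNIV. X i) \<subseteq> Oo"
    by auto
  obtain N where N: "\<And>i. X i \<noteq> UNIV \<Longrightarrow> i < N"
    using X(3) unfolding finite_nat_set_iff_bounded by auto
  have cc: "0 \<le> c i \<and> c i \<le> 1" for i using c Oo unfolding cube_def by auto
  have "\<forall>i. \<exists>y e. 0 < e \<and> e \<le> y \<and> y + e \<le> 1 \<and> (\<forall>s. \<bar>s - y\<bar> < e \<longrightarrow> s \<in> X i)"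
  proof
    fix i
    show "\<exists>y e. 0 < e \<and> e \<le> y \<and> y + e \<le> 1 \<and> (\<forall>s. \<bar>s - y\<bar> < e \<longrightarrow> s \<in> X i)"
    proof (rule real_interior_point[OF X(2)[of i]])
      show "c i \<in> X i" using X(1) by (auto simp: PiE_UNIV_domain)
      show "0 \<le> c i" "c i \<le> 1" using cc[of i] by auto
    qed
  qed
  then obtain yf ef where yf: "\<And>i. 0 < ef i \<and> ef i \<le> yf i \<and> yf i + ef i \<le> 1 \<and> (\<forall>s. \<bar>s - yf i\<bar> < ef i \<longrightarrow> s \<in> X i)"
    by metis
  define y where "y = (\<lambda>i. if i < N then yf i else 1/2)"
  show ?thesis
  proof (rule that[of N y ef])
    show "\<forall>i\<ge>N. y i = 1/2" unfolding y_def by auto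
    show "\<forall>i<N. 0 < ef i \<and> ef i \<le> y i \<and> y i + ef i \<le> 1" unfolding y_def using yf by auto
    show "{t \<in> cube. \<forall>i<N. \<bar>t i - y i\<bar> < ef i} \<subseteq> Q"
    proof
      fix t assume t: "t \<in> {t \<in> cube. \<forall>i<N. \<bar>t i - y i\<bar> < ef i}"
      have "t \<in> (\<Pi>\<^sub>E i\<in>UNIV. X i)"
      proof (unfold PiE_UNIV_domain, rule Pi_I)
        fix i
        show "t i \<in> X i"
        proof (cases "i < N")
          case True
          then show ?thesis using t yf[of i] unfolding y_def by auto
        next
          case False
          then show ?thesis using N[of i] by auto
        qed
      qed
      then show "t \<in> Q" using X(4) Oo(2) t by auto
    qed
  qed
qed

definition ilv :: "(nat \<Rightarrow> real) \<times> (nat \<Rightarrow> real) \<Rightarrow> (nat \<Rightarrow> real)" where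
  "ilv p = (\<lambda>n. if even n then fst p (n div 2) else snd p (n div 2))"

definition dlv :: "(nat \<Rightarrow> real) \<Rightarrow> (nat \<Rightarrow> real) \<times> (nat \<Rightarrow> real)" where
  "dlv z = ((\<lambda>n. z (2*n)), (\<lambda>n. z (2*n+1)))"

lemma dlv_ilv [simp]: "dlv (ilv p) = p"
  unfolding dlv_def ilv_def by (cases p) auto

lemma ilv_dlv [simp]: "ilv (dlv z) = z"
  unfolding dlv_def ilv_def by (auto simp: fun_eq_iff elim!: evenE oddE)

lemma coord_cont: "continuous_on S (\<lambda>x::nat\<Rightarrow>real. x i)"
  by (rule continuous_on_subset[OF continuous_on_product_coordinates]) simp

lemma ilv_cont: "continuous_on S ilv"
  unfolding ilv_def
proof (intro continuous_on_coordinatewise_then_product)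
  fix n
  show "continuous_on S (\<lambda>p. if even n then fst p (n div 2) else snd p (n div 2))"
  proof (cases "even n")
    case True
    have "continuous_on S ((\<lambda>x::nat\<Rightarrow>real. x (n div 2)) \<circ> fst)"
      by (intro continuous_on_compose continuous_on_fst continuous_on_id coord_cont)
    then show ?thesis using True by (simp add: o_def)
  next
    case False
    have "continuous_on S ((\<lambda>x::nat\<Rightarrow>real. x (n div 2)) \<circ> snd)"
      by (intro continuous_on_compose continuous_on_snd continuous_on_id coord_cont)
    then show ?thesis using False by (simp add: o_def)
  qed
qed

lemma dlv_cont: "continuous_on S dlv"
  unfolding dlv_def
  by (intro continuous_on_Pair continuous_on_coordinatewise_then_product coord_cont)

lemma ilv_homeo:
  "homeomorphic_map (top_of_set A) (top_of_set (ilv ` A)) ilv"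
  unfolding homeomorphic_map_maps
proof (rule exI[of _ dlv], unfold homeomorphic_maps_def, intro conjI)
  show "continuous_map (top_of_set A) (top_of_set (ilv ` A)) ilv"
    by (simp add: ilv_cont Pi_iff)
  show "continuous_map (top_of_set (ilv ` A)) (top_of_set A) dlv"
    by (auto simp: dlv_cont Pi_iff)
  show "\<forall>x\<in>topspace (top_of_set A). dlv (ilv x) = x" by simp
  show "\<forall>y\<in>topspace (top_of_set (ilv ` A)). ilv (dlv y) = y" by simp
qed

primrec seqp :: "(nat \<Rightarrow> 'b list \<Rightarrow> 'b \<Rightarrow> bool) \<Rightarrow> nat \<Rightarrow> 'b list" where
  "seqp \<Phi> 0 = []"
| "seqp \<Phi> (Suc n) = seqp \<Phi> n @ [SOME w. \<Phi> n (seqp \<Phi> n) w]"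

lemma dep_choice:
  assumes "\<And>n l. \<exists>w. \<Phi> n l w"
  shows "\<exists>v. \<forall>n. \<Phi> n (map v [0..<n]) (v n)"
proof -
  define v where "v n = (SOME w. \<Phi> n (seqp \<Phi> n) w)" for n
  have len: "length (seqp \<Phi> n) = n" for n by (induction n) auto
  have eq: "seqp \<Phi> n = map v [0..<n]" for n
    by (induction n) (auto simp: v_def)
  have "\<Phi> n (seqp \<Phi> n) (v n)" for n unfolding v_def by (rule someI_ex) (rule assms)
  then show ?thesis using eq by metis
qed

lemma second_countable_eu: "second_countable (euclidean :: 'a::second_countable_topology topology)"
proof -
  obtain B :: "'a set set" where B: "countable B" "topological_basis B" using ex_countable_basis by blast
  show ?thesis unfolding second_countable_def
  proof (intro exI[of _ B] conjI ballI allI impI)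
    show "countable B" by (rule B(1))
    show "openin euclidean V" if "V \<in> B" for V using B(2) that topological_basis_open by auto
    fix U :: "'a set" and x :: 'a assume "openin euclidean U \<and> x \<in> U"
    then have "open U" "x \<in> U" by auto
    show "\<exists>V\<in>B. x \<in> V \<and> V \<subseteq> U"
      by (rule topological_basisE[OF B(2) \<open>open U\<close> \<open>x \<in> U\<close>]) blast
  qed
qed

lemma transl_mem: "(a \<in> (\<lambda>b. b + x) ` B) \<longleftrightarrow> (a - x \<in> (B :: 'a::ab_group_add set))"
proof
  assume "a \<in> (\<lambda>b. b + x) ` B"
  then obtain b where "b \<in> B" "a = b + x" by auto
  then show "a - x \<in> B" by simp
next
  assume "a - x \<in> B"
  moreover have "a = (a - x) + x" by simp
  ultimately show "a \<in> (\<lambda>b. b + x) ` B" by (rule rev_image_eqI)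
qed

lemma psum_cong: "(\<And>i. i < n \<Longrightarrow> u i = v i) \<Longrightarrow> psum u n t = psum v n t"
  unfolding psum_def by (intro sum.cong) auto

lemma compact_sets_baire:
  fixes S :: "'a::metric_space set"
  assumes "compact S"
  shows "\<And>U. openin (top_of_set S) U \<Longrightarrow> U \<noteq> {} \<Longrightarrow> \<not> meager_in (top_of_set S) U"
  using compact_baire[OF assms] by blast

lemma coord_box_open: "open {t::nat\<Rightarrow>real. \<forall>i<N. \<bar>t i - y i\<bar> < \<epsilon> i}"
proof -
  have eq: "{t::nat\<Rightarrow>real. \<forall>i<N. \<bar>t i - y i\<bar> < \<epsilon> i} = (\<Inter>i\<in>{..<N}. (\<lambda>t. t i) -` ball (y i) (\<epsilon> i))"
    by (auto simp: dist_real_def abs_minus_commute)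
  have "open ((\<lambda>t::nat\<Rightarrow>real. t i) -` ball (y i) (\<epsilon> i))" for i
    using coord_cont[of UNIV i] by (intro open_vimage) auto
  then show ?thesis unfolding eq by auto
qed

lemma coord_lt_open: "open {t::nat\<Rightarrow>real. a < t j \<and> t j < b}"
proof -
  have "{t::nat\<Rightarrow>real. a < t j \<and> t j < b} = (\<lambda>t. t j) -` {a<..<b}" by auto
  moreover have "open ((\<lambda>t::nat\<Rightarrow>real. t j) -` {a<..<b})"
    using coord_cont[of UNIV j] by (intro open_vimage) auto
  ultimately show ?thesis by simp
qed

lemma half_double: "(1/2) *\<^sub>R (z + z) = (z::'a::real_vector)"
proof -
  have "(1/2) *\<^sub>R (z + z) = (1/2) *\<^sub>R z + (1/2) *\<^sub>R z" by (rule scaleR_add_right)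
  also have "\<dots> = ((1/2) + (1/2)) *\<^sub>R z" by (rule scaleR_add_left[symmetric])
  finally show ?thesis by simp
qed

theorem mainTheorem5:
  fixes \<Omega> T :: "'a::{polish_space, real_vector} set"
    and f :: "'a \<Rightarrow> real"
  assumes add_cont: "continuous_on UNIV (\<lambda>p::'a \<times> 'a. fst p + snd p)"
    and scale_cont: "continuous_on UNIV (\<lambda>p::real \<times> 'a. fst p *\<^sub>R snd p)"
    and "\<Omega> \<noteq> {}" and "convex \<Omega>" and "open \<Omega>"
    and "jensen_convex_on \<Omega> f"
    and "T \<subseteq> \<Omega>" and "D_measurable T" and "\<not> haar_meager T"
    and "\<exists>M. \<forall>t\<in>T. f t \<le> M"
  shows "continuous_on \<Omega> f"
proof (rule ccontr)
  note AC = add_cont and SC = scale_cont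
  note ne = assms(3) and C = assms(4) and Oo = assms(5) and J = assms(6) and TO = assms(7)
    and Dm = assms(8) and nHM = assms(9) and bdd = assms(10)
  assume nc: "\<not> continuous_on \<Omega> f"
  have UNB: "\<exists>u\<in>U. c < f u" if U: "open U" "U \<subseteq> \<Omega>" "U \<noteq> {}" for U c
  proof (rule ccontr)
    assume "\<not> (\<exists>u\<in>U. c < f u)"
    then have bd: "\<forall>u\<in>U. f u \<le> c" by (simp add: not_less)
    obtain p0 where "p0 \<in> U" using U(3) by blast
    from BD[OF AC SC J C Oo U(1) this U(2) bd] nc show False by simp
  qed
  obtain M where fM: "\<forall>t\<in>T. f t \<le> M" using bdd by blast
  obtain B0 M0 where B0: "B0 \<in> sets borel" "haar_meager M0" "T = B0 \<union> M0"
    using Dm unfolding D_measurable_def by blast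
  obtain B1 and K1 :: "(nat \<Rightarrow> real) set" and g1 :: "(nat \<Rightarrow> real) \<Rightarrow> 'a" where
    B1: "B1 \<in> sets borel" "M0 \<subseteq> B1" "K1 \<noteq> {}" "compact K1" "continuous_on K1 g1"
        "\<forall>x. meager_in (top_of_set K1) {k \<in> K1. g1 k \<in> (\<lambda>b. b + x) ` B1}"
    using B0(2) unfolding haar_meager_def by blast
  define S where "S = {y \<in> \<Omega>. f y \<le> M}"
  have B0S: "B0 \<subseteq> S" using B0(3) TO fM unfolding S_def by auto
  have Smid: "(1/2) *\<^sub>R (a + b) \<in> S" if "a \<in> S" "b \<in> S" for a b
  proof -
    have "(1/2) *\<^sub>R a + (1/2) *\<^sub>R b \<in> \<Omega>" using C that unfolding S_def convex_def by auto
    then have "(1/2) *\<^sub>R (a + b) \<in> \<Omega>" by (simp add: scaleR_add_right)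
    moreover have "f ((1/2) *\<^sub>R (a + b)) \<le> (f a + f b)/2"
      using J that unfolding jensen_convex_on_def S_def by auto
    ultimately show ?thesis using that unfolding S_def by auto
  qed
  obtain Dd :: "'a set" where Dd: "countable Dd" "\<And>X. open X \<Longrightarrow> X \<noteq> {} \<Longrightarrow> \<exists>d\<in>Dd. d \<in> X"
    by (rule countable_dense_setE) blast
  define D' where "D' = Dd \<inter> \<Omega>"
  have D'ne: "D' \<noteq> {}" using Dd(2)[OF Oo ne] unfolding D'_def by auto
  have cD': "countable D'" using Dd(1) unfolding D'_def by simp
  define en where "en = from_nat_into D'"
  have ren: "range en = D'" unfolding en_def using D'ne cD' by simp
  define qq where "qq n = en (fst (prod_decode n))" for n
  have qqO: "qq n \<in> \<Omega>" for n
  proof -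
    have "qq n \<in> range en" unfolding qq_def by simp
    then show ?thesis unfolding ren D'_def by simp
  qed
  define \<Phi> where "\<Phi> n l w \<longleftrightarrow>
      (\<forall>t\<in>cube. dist (psum (\<lambda>i. l ! i) n t + t n *\<^sub>R w) (psum (\<lambda>i. l ! i) n t) < (1/2)^n) \<and>
      qq n + (1/8) *\<^sub>R w \<in> \<Omega> \<and> real n \<le> f (qq n + (1/8) *\<^sub>R w)"
    for n :: nat and l :: "'a list" and w :: 'a
  have exw: "\<exists>w. \<Phi> n l w" for n l
  proof -
    define P where "P = psum (\<lambda>i. l ! i) n"
    have cP: "continuous_on UNIV P" unfolding P_def by (rule psum_cont[OF AC SC])
    define Kc where "Kc = P ` cube \<times> {0..1::real}"
    have cKc: "compact Kc" unfolding Kc_def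
      by (intro compact_Times compact_continuous_image compact_cube compact_Icc continuous_on_subset[OF cP]) auto
    define hh where "hh z = dist (fst (snd z) + snd (snd z) *\<^sub>R fst z) (fst (snd z))" for z :: "'a \<times> ('a \<times> real)"
    have chh: "continuous_on UNIV hh"
      unfolding hh_def
      by (intro continuous_on_dist tvs_add[OF AC] tvs_scale[OF SC] continuous_on_fst continuous_on_snd continuous_on_id)
    define O3 where "O3 = hh -` {..<(1/2::real)^n}"
    have oO3: "open O3" unfolding O3_def using chh by (intro open_vimage) auto
    have "{0} \<times> Kc \<subseteq> O3" unfolding O3_def hh_def by auto
    from Elementary_Topology.tube_lemma[OF cKc oO3 this] obtain X0 where X0: "0 \<in> X0" "open X0" "X0 \<times> Kc \<subseteq> O3" by auto
    define U where "U = \<Omega> \<inter> (\<lambda>y. 8 *\<^sub>R y + (- 8 *\<^sub>R qq n)) -` X0"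
    have oU: "open U" unfolding U_def
      by (rule open_Int[OF Oo tvs_open_affine_vimage[OF AC SC X0(2), of 8 "- 8 *\<^sub>R qq n"]])
    have "qq n \<in> U" unfolding U_def using qqO X0(1) by simp
    then have Une: "U \<noteq> {}" by auto
    have Usub: "U \<subseteq> \<Omega>" unfolding U_def by auto
    obtain y where y: "y \<in> U" "real n < f y" using UNB[OF oU Usub Une, of "real n"] by auto
    define w where "w = 8 *\<^sub>R y + (- 8 *\<^sub>R qq n)"
    have wX0: "w \<in> X0" using y(1) unfolding U_def w_def by auto
    have yw: "qq n + (1/8) *\<^sub>R w = y" unfolding w_def by (simp add: scaleR_add_right scaleR_diff_right)
    have "\<forall>t\<in>cube. dist (P t + t n *\<^sub>R w) (P t) < (1/2)^n"
    proof
      fix t assume "t \<in> cube"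
      then have "(w, (P t, t n)) \<in> X0 \<times> Kc" using wX0 unfolding Kc_def cube_def by auto
      then show "dist (P t + t n *\<^sub>R w) (P t) < (1/2)^n" using X0(3) unfolding O3_def hh_def by auto
    qed
    moreover have "y \<in> \<Omega>" using y(1) unfolding U_def by auto
    ultimately have "\<Phi> n l w" unfolding \<Phi>_def P_def using yw y(2) by auto
    then show ?thesis by blast
  qed
  obtain v where v: "\<And>n. \<Phi> n (map v [0..<n]) (v n)" using dep_choice[of \<Phi>, OF exw] by blast
  have small: "dist (psum v (Suc n) t) (psum v n t) < (1/2)^n" if "t \<in> cube" for n t
  proof -
    have e: "psum ((!) (map v [0..<n])) n t = psum v n t" by (rule psum_cong) simp
    from v[of n] that have "dist (psum ((!) (map v [0..<n])) n t + t n *\<^sub>R v n) (psum ((!) (map v [0..<n])) n t) < (1/2)^n"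
      unfolding \<Phi>_def by auto
    then show ?thesis unfolding e psum_Suc .
  qed
  have hv: "qq n + (1/8) *\<^sub>R v n \<in> \<Omega>" "real n \<le> f (qq n + (1/8) *\<^sub>R v n)" for n
    using v[of n] unfolding \<Phi>_def by auto
  define gh where "gh t = lim (\<lambda>n. psum v n t)" for t
  have ghc: "continuous_on cube gh" unfolding gh_def by (rule series_limit(1)[OF AC SC small])
  have ghl: "(\<lambda>n. psum v n t) \<longlonglongrightarrow> gh t" if "t \<in> cube" for t
    unfolding gh_def by (rule series_limit(2)[OF AC SC small that])
  have gh_mid: "gh (\<lambda>i. (t i + t' i) / 2) = (1/2) *\<^sub>R (gh t + gh t')" if "t \<in> cube" "t' \<in> cube" for t t'
  proof -
    have m: "(\<lambda>i. (t i + t' i) / 2) \<in> cube" using that unfolding cube_def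
      by (auto simp: add_nonneg_nonneg) (smt (verit))
    have "(\<lambda>n. (1/2) *\<^sub>R (psum v n t + psum v n t')) \<longlonglongrightarrow> (1/2) *\<^sub>R (gh t + gh t')"
      by (intro tvs_tendsto_scale[OF SC] tvs_tendsto_add[OF AC] ghl that)
    then have "(\<lambda>n. psum v n (\<lambda>i. (t i + t' i) / 2)) \<longlonglongrightarrow> (1/2) *\<^sub>R (gh t + gh t')"
      by (simp only: psum_mid)
    with ghl[OF m] show ?thesis by (rule LIMSEQ_unique)
  qed
  have gh_shift: "gh (t(j := t j + s)) = gh t + s *\<^sub>R v j" if "t \<in> cube" "t(j := t j + s) \<in> cube" for t j s
  proof -
    have "(\<lambda>n. psum v n t + s *\<^sub>R v j) \<longlonglongrightarrow> gh t + s *\<^sub>R v j"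
      by (intro tvs_tendsto_add[OF AC] ghl that tendsto_const)
    moreover have "eventually (\<lambda>n. psum v n t + s *\<^sub>R v j = psum v n (t(j := t j + s))) sequentially"
      unfolding eventually_sequentially by (rule exI[of _ "Suc j"]) (simp add: psum_shift)
    ultimately have "(\<lambda>n. psum v n (t(j := t j + s))) \<longlonglongrightarrow> gh t + s *\<^sub>R v j"
      by (rule Lim_transform_eventually)
    with ghl[OF that(2)] show ?thesis by (rule LIMSEQ_unique)
  qed
  define \<phi> where "\<phi> p = g1 (fst p) + gh (snd p)" for p
  have \<phi>c: "continuous_on (K1 \<times> cube) \<phi>"
    unfolding \<phi>_def
  proof (rule tvs_add[OF AC])
    show "continuous_on (K1 \<times> cube) (\<lambda>p. g1 (fst p))"
      by (rule continuous_on_compose2[OF B1(5) continuous_on_fst[OF continuous_on_id]]) auto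
    show "continuous_on (K1 \<times> cube) (\<lambda>p. gh (snd p))"
      by (rule continuous_on_compose2[OF ghc continuous_on_snd[OF continuous_on_id]]) auto
  qed
  define K where "K = ilv ` (K1 \<times> cube)"
  have cK: "compact K" unfolding K_def
    by (intro compact_continuous_image ilv_cont compact_Times B1(4) compact_cube)
  have Kne: "K \<noteq> {}" unfolding K_def using B1(3) cube_nonempty by auto
  define g where "g z = \<phi> (dlv z)" for z
  have gc: "continuous_on K g" unfolding g_def
    by (rule continuous_on_compose2[OF \<phi>c dlv_cont]) (auto simp: K_def)
  define B where "B = B0 \<union> B1"
  have Bb: "B \<in> sets borel" unfolding B_def using B0(1) B1(1) by auto
  have TB: "T \<subseteq> B" unfolding B_def using B0(3) B1(2) by auto
  have "\<not> (\<forall>x. meager_in (top_of_set K) {z \<in> K. g z \<in> (\<lambda>b. b + x) ` B})"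
  proof
    assume "\<forall>x. meager_in (top_of_set K) {z \<in> K. g z \<in> (\<lambda>b. b + x) ` B}"
    then have "haar_meager T" unfolding haar_meager_def using Bb TB Kne cK gc by blast
    then show False using nHM by simp
  qed
  then obtain x where x: "\<not> meager_in (top_of_set K) {z \<in> K. g z \<in> (\<lambda>b. b + x) ` B}" by blast
  define P where "P = top_of_set (K1 \<times> cube)"
  have Pprod: "prod_topology (top_of_set K1) (top_of_set cube) = P" unfolding P_def by simp
  define G where "G = {p \<in> K1 \<times> cube. \<phi> p \<in> (\<lambda>b. b + x) ` B}"
  have "ilv ` G = {z \<in> K. g z \<in> (\<lambda>b. b + x) ` B}"
  proof
    show "ilv ` G \<subseteq> {z \<in> K. g z \<in> (\<lambda>b. b + x) ` B}"
      unfolding G_def K_def g_def by auto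
    show "{z \<in> K. g z \<in> (\<lambda>b. b + x) ` B} \<subseteq> ilv ` G"
    proof
      fix z assume z: "z \<in> {z \<in> K. g z \<in> (\<lambda>b. b + x) ` B}"
      then obtain p where p: "p \<in> K1 \<times> cube" "z = ilv p" unfolding K_def by auto
      then have "p \<in> G" using z unfolding G_def g_def by auto
      then show "z \<in> ilv ` G" using p(2) by auto
    qed
  qed
  moreover have "meager_in P G \<Longrightarrow> meager_in (top_of_set K) (ilv ` G)"
    unfolding P_def K_def by (rule homeo_meager[OF ilv_homeo])
  ultimately have Gnm: "\<not> meager_in P G" using x by auto
  define G0 where "G0 = {p \<in> K1 \<times> cube. \<phi> p \<in> (\<lambda>b. b + x) ` B0}"
  define H1 where "H1 = {p \<in> K1 \<times> cube. \<phi> p \<in> (\<lambda>b. b + x) ` B1}"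
  have GG: "G = G0 \<union> H1" unfolding G_def G0_def H1_def B_def by auto
  have \<phi>xc: "continuous_map P euclidean (\<lambda>p. \<phi> p + (- x))"
    unfolding P_def continuous_map_iff_continuous
    by (intro tvs_add[OF AC] \<phi>c continuous_on_const)
  have BPset: "baire_prop P {p \<in> K1 \<times> cube. \<phi> p \<in> (\<lambda>b. b + x) ` E}" if "E \<in> sets borel" for E
  proof -
    have "{p \<in> topspace P. \<phi> p + (- x) \<in> E} = {p \<in> K1 \<times> cube. \<phi> p \<in> (\<lambda>b. b + x) ` E}"
      unfolding P_def by (auto simp: transl_mem)
    with baire_prop_borel_preimage[OF \<phi>xc that] show ?thesis by simp
  qed
  have sc1: "second_countable (top_of_set K1)" by (rule second_countable_subtopology[OF second_countable_eu])
  have scc: "second_countable (top_of_set cube)" by (rule second_countable_subtopology[OF second_countable_eu])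
  have H1m: "meager_in P H1"
  proof -
    have "meager_in (prod_topology (top_of_set K1) (top_of_set cube)) H1"
    proof (rule KU_hard[OF sc1 compact_sets_baire[OF B1(4)] compact_sets_baire[OF compact_cube]])
      show "baire_prop (prod_topology (top_of_set K1) (top_of_set cube)) H1"
        unfolding Pprod H1_def by (rule BPset[OF B1(1)])
      fix t assume "t \<in> topspace (top_of_set cube)"
      then have t: "t \<in> cube" by simp
      have "{k. (k, t) \<in> H1} = {k \<in> K1. g1 k \<in> (\<lambda>b. b + (x - gh t)) ` B1}"
        unfolding H1_def \<phi>_def transl_mem using t by (auto simp: algebra_simps)
      then show "meager_in (top_of_set K1) {k. (k, t) \<in> H1}" using B1(6) by simp
    qed
    then show ?thesis unfolding Pprod .
  qed
  have G0nm: "\<not> meager_in P G0"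
  proof
    assume "meager_in P G0"
    then have "meager_in P (G0 \<union> H1)" using H1m by (rule meager_in_Un)
    then show False using Gnm GG by simp
  qed
  have BPG0: "baire_prop P G0" unfolding G0_def by (rule BPset[OF B0(1)])
  obtain W0 where W0: "openin P W0" "W0 \<noteq> {}" "meager_in P (W0 - G0)"
    using baire_prop_nonmeager[OF BPG0 G0nm] by blast
  obtain k0 t0 where kt0: "(k0, t0) \<in> W0" using W0(2) by auto
  obtain U1 Q where UQ: "openin (top_of_set K1) U1" "openin (top_of_set cube) Q" "k0 \<in> U1" "t0 \<in> Q"
      "U1 \<times> Q \<subseteq> W0"
    using W0(1) kt0 unfolding Pprod[symmetric] openin_prod_topology_alt by meson
  define Z where "Z = U1 \<times> Q - G0"
  have "Z \<subseteq> W0 - G0" unfolding Z_def using UQ(5) by auto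
  with W0(3) have Zm: "meager_in (prod_topology (top_of_set K1) (top_of_set cube)) Z"
    unfolding Pprod by (rule meager_in_subset)
  define E where "E = {k \<in> topspace (top_of_set K1). \<not> meager_in (top_of_set cube) {t. (k,t) \<in> Z}}"
  have Em: "meager_in (top_of_set K1) E" unfolding E_def by (rule KU_easy[OF scc Zm])
  have "\<not> U1 \<subseteq> E"
  proof
    assume "U1 \<subseteq> E"
    then have "meager_in (top_of_set K1) U1" using Em by (rule meager_in_subset[rotated])
    then show False using compact_baire[OF B1(4) UQ(1)] UQ(3) by auto
  qed
  then obtain k where k: "k \<in> U1" "k \<notin> E" by blast
  have kK: "k \<in> K1" using openin_subset[OF UQ(1)] k(1) by auto
  define Gk where "Gk = {t. (k, t) \<in> G0}"
  have Qsub: "Q \<subseteq> cube" using openin_subset[OF UQ(2)] by simp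
  have QGm: "meager_in (top_of_set cube) (Q - Gk)"
  proof -
    have "{t. (k,t) \<in> Z} = Q - Gk" unfolding Z_def Gk_def using k(1) by auto
    moreover have "meager_in (top_of_set cube) {t. (k,t) \<in> Z}" using k kK unfolding E_def by auto
    ultimately show ?thesis by simp
  qed
  have Qne: "Q \<noteq> {}" using UQ(4) by auto
  obtain y N \<epsilon> where yN: "\<forall>i\<ge>N. y i = 1/2" "\<forall>i<N. 0 < \<epsilon> i \<and> \<epsilon> i \<le> y i \<and> y i + \<epsilon> i \<le> 1"
     "{t \<in> cube. \<forall>i<N. \<bar>t i - y i\<bar> < \<epsilon> i} \<subseteq> Q"
    by (rule cube_box[OF UQ(2) Qne])
  define Bx where "Bx = {t \<in> cube. \<forall>i<N. \<bar>t i - y i\<bar> < \<epsilon> i}"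
  have oBx: "openin (top_of_set cube) Bx"
    unfolding Bx_def openin_open by (rule exI[of _ "{t. \<forall>i<N. \<bar>t i - y i\<bar> < \<epsilon> i}"]) (auto simp: coord_box_open)
  have yc: "y \<in> cube"
  proof -
    have "0 \<le> y i \<and> y i \<le> 1" for i
      using yN(1)[rule_format, of i] yN(2)[rule_format, of i] by (cases "i < N") auto
    then show ?thesis unfolding cube_def by auto
  qed
  have key: "g1 k + gh y' - x \<in> S"
    if W: "openin (top_of_set cube) W" "y' \<in> W" "W \<subseteq> Bx"
      and RW: "\<And>t. t \<in> W \<Longrightarrow> (\<lambda>i. 2 * y' i - t i) \<in> W" for y' W
  proof -
    have "W - Gk \<subseteq> Q - Gk" using W(3) yN(3) unfolding Bx_def by auto
    with QGm have "meager_in (top_of_set cube) (W - Gk)" by (rule meager_in_subset)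
    moreover have "W \<noteq> {}" using W(2) by auto
    ultimately obtain t where t: "t \<in> W" "t \<in> Gk" "(\<lambda>i. 2 * y' i - t i) \<in> Gk"
      using refl_pair[OF W(1) _ RW] by blast
    let ?t' = "(\<lambda>i. 2 * y' i - t i)"
    have tc: "t \<in> cube" "?t' \<in> cube" using t(1) RW[OF t(1)] W(3) unfolding Bx_def by auto
    have a: "g1 k + gh t - x \<in> B0" "g1 k + gh ?t' - x \<in> B0"
      using t(2,3) unfolding Gk_def G0_def \<phi>_def by (auto simp: transl_mem)
    then have aS: "g1 k + gh t - x \<in> S" "g1 k + gh ?t' - x \<in> S" using B0S by auto
    have mid: "(\<lambda>i. (t i + ?t' i) / 2) = y'" by auto
    have "(1/2) *\<^sub>R ((g1 k + gh t - x) + (g1 k + gh ?t' - x))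
        = (1/2) *\<^sub>R ((g1 k - x) + (g1 k - x)) + (1/2) *\<^sub>R (gh t + gh ?t')"
      by (simp add: algebra_simps)
    also have "(1/2) *\<^sub>R ((g1 k - x) + (g1 k - x)) = g1 k - x" by (rule half_double)
    also have "(1/2) *\<^sub>R (gh t + gh ?t') = gh y'" using gh_mid[OF tc] mid by simp
    finally have "(1/2) *\<^sub>R ((g1 k + gh t - x) + (g1 k + gh ?t' - x)) = g1 k + gh y' - x"
      by (simp add: algebra_simps)
    with Smid[OF aS] show ?thesis by simp
  qed
  have pS: "g1 k + gh y - x \<in> S"
  proof (rule key[OF oBx])
    show "y \<in> Bx" unfolding Bx_def using yc yN(2) by auto
    show "Bx \<subseteq> Bx" by simp
    fix t assume t: "t \<in> Bx"
    show "(\<lambda>i. 2 * y i - t i) \<in> Bx"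
    proof -
      have "0 \<le> 2 * y i - t i \<and> 2 * y i - t i \<le> 1" for i
      proof (cases "i < N")
        case True
        have h1: "\<bar>t i - y i\<bar> < \<epsilon> i" using t True unfolding Bx_def by auto
        have h2: "\<epsilon> i \<le> y i" "y i + \<epsilon> i \<le> 1" using yN(2) True by auto
        from h1 h2 show ?thesis by arith
      next
        case False
        then have "y i = 1/2" using yN(1) by simp
        moreover have "0 \<le> t i" "t i \<le> 1" using t unfolding Bx_def cube_def by auto
        ultimately show ?thesis by simp
      qed
      moreover have "\<forall>i<N. \<bar>2 * y i - t i - y i\<bar> < \<epsilon> i" using t unfolding Bx_def by (auto simp: abs_minus_commute)
      ultimately show ?thesis unfolding Bx_def cube_def by auto
    qed
  qed
  have pjS: "g1 k + gh y - x + (1/4) *\<^sub>R v j \<in> S" if Nj: "N \<le> j" for j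
  proof -
    define y' where "y' = y(j := y j + 1/4)"
    have yj: "y j = 1/2" using yN(1) Nj by simp
    define W where "W = Bx \<inter> {t. 1/2 < t j \<and> t j < 1}"
    have y'c: "y' \<in> cube" using yc yj unfolding y'_def cube_def by auto
    have "g1 k + gh y' - x \<in> S"
    proof (rule key)
      show "openin (top_of_set cube) W" unfolding W_def
        by (intro openin_Int_open oBx coord_lt_open)
      have "\<forall>i<N. \<bar>y' i - y i\<bar> < \<epsilon> i" using yN(2) Nj unfolding y'_def by auto
      moreover have "1/2 < y' j \<and> y' j < 1" unfolding y'_def using yj by simp
      ultimately show "y' \<in> W" unfolding W_def Bx_def using y'c by auto
      show "W \<subseteq> Bx" unfolding W_def by auto
      fix t assume t: "t \<in> W"
      show "(\<lambda>i. 2 * y' i - t i) \<in> W"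
      proof -
        have "0 \<le> 2 * y' i - t i \<and> 2 * y' i - t i \<le> 1" for i
        proof (cases "i < N")
          case True
          then have yy: "y' i = y i" unfolding y'_def using Nj by auto
          have h1: "\<bar>t i - y i\<bar> < \<epsilon> i" using t True unfolding W_def Bx_def by auto
          have h2: "\<epsilon> i \<le> y i" "y i + \<epsilon> i \<le> 1" using yN(2) True by auto
          from h1 h2 yy show ?thesis by arith
        next
          case False
          show ?thesis
          proof (cases "i = j")
            case True
            then show ?thesis using t yj unfolding W_def y'_def by auto
          next
            case ij: False
            then have "y' i = 1/2" unfolding y'_def using yN(1) False by auto
            moreover have "0 \<le> t i" "t i \<le> 1" using t unfolding W_def Bx_def cube_def by auto
            ultimately show ?thesis by simp
          qed
        qed
        moreover have "\<forall>i<N. \<bar>2 * y' i - t i - y i\<bar> < \<epsilon> i"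
          using t Nj unfolding W_def Bx_def y'_def by (auto simp: abs_minus_commute)
        moreover have "1/2 < 2 * y' j - t j \<and> 2 * y' j - t j < 1" using t yj unfolding W_def y'_def by auto
        ultimately show ?thesis unfolding W_def Bx_def cube_def by auto
      qed
    qed
    moreover have "gh y' = gh y + (1/4) *\<^sub>R v j" unfolding y'_def by (rule gh_shift[OF yc y'c[unfolded y'_def]])
    ultimately show ?thesis by (simp add: algebra_simps)
  qed
  define p where "p = g1 k + gh y - x"
  have pO: "p \<in> \<Omega>" using pS unfolding S_def p_def by auto
  define O2 where "O2 = \<Omega> \<inter> (\<lambda>q. 2 *\<^sub>R q + (- p)) -` \<Omega>"
  have oO2: "open O2" unfolding O2_def
    by (rule open_Int[OF Oo tvs_open_affine_vimage[OF AC SC Oo, of 2 "- p"]])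
  have "p \<in> O2" unfolding O2_def using pO by (simp add: scaleR_2)
  then obtain d where d: "d \<in> Dd" "d \<in> O2" using Dd(2)[OF oO2] by blast
  have "d \<in> D'" using d unfolding D'_def O2_def by auto
  then obtain m where m: "en m = d" using ren by (metis rangeE)
  define r where "r = 2 *\<^sub>R d + (- p)"
  have rO: "r \<in> \<Omega>" using d(2) unfolding O2_def r_def by auto
  define J0 where "J0 = N + nat \<lceil>(M + f r) / 2\<rceil> + 1"
  define j where "j = prod_encode (m, J0)"
  have jJ0: "J0 \<le> j" unfolding j_def by (rule le_prod_encode_2)
  have qqj: "qq j = d" unfolding qq_def j_def using m by simp
  have Nj: "N \<le> j" using jJ0 unfolding J0_def by simp
  have eqpt: "qq j + (1/8) *\<^sub>R v j = (1/2) *\<^sub>R ((p + (1/4) *\<^sub>R v j) + r)"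
    unfolding qqj r_def by (simp add: algebra_simps)
  have pjS': "p + (1/4) *\<^sub>R v j \<in> S" using pjS[OF Nj] unfolding p_def .
  have "f (qq j + (1/8) *\<^sub>R v j) \<le> (f (p + (1/4) *\<^sub>R v j) + f r) / 2"
    unfolding eqpt using J pjS' rO unfolding jensen_convex_on_def S_def by auto
  also have "\<dots> \<le> (M + f r) / 2" using pjS' unfolding S_def by auto
  also have "\<dots> < real J0" unfolding J0_def using real_nat_ceiling_ge[of "(M + f r) / 2"] by simp
  also have "\<dots> \<le> real j" using jJ0 by simp
  finally show False using hv(2)[of j] by simp
qed

end
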